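(* Let $X$, $Y$ be Banach spaces with $Y$ continuously embedded in $X$, and let $T\in(0,\infty]$. Assume: $G$ generates a $C_0$-semigroup $(S(t))_{t\ge0}$ on $X$ with $S(t)Y\subseteq Y$ for every $t\ge0$ and $t\mapsto S(t)y$ continuous from $[0,\infty)$ to $Y$ for every $y\in Y$; there is $\eta:(0,\infty)\to(0,\infty)$ with $\eta(\delta)\to0$ as $\delta\to0^+$ such that for all $0\le s_0<s_1$ and $\varphi\in C([s_0,s_1],X)$, $\int_{s_0}^{s_1}S(s_1-s)\varphi(s)\,ds\in Y$ and $\|\int_{s_0}^{s_1}S(s_1-s)\varphi(s)\,ds\|_Y\le\eta(s_1-s_0)\|\varphi\|_{C([s_0,s_1],X)}$; $\mathcal D(G)$ is a dense subspace of $Y$; and $\gamma\in\mathbb R$, $H\in\mathcal B(Y,X)$ are such that $G-\gamma H$ generates a $C_0$-semigroup $(S_\gamma(t))_{t\ge0}$ on $X$. Let $t_0,\tau\in[0,T)$ with $t_0<\tau$, $f\in C([t_0,\tau],X)$, $\mathring u\in Y$, and define $u(t)=S(t-t_0)\mathring u+\int_{t_0}^tS(t-s)f(s)\,ds$ for $t\in[t_0,\tau]$. Then $u(t)=S_\gamma(t-t_0)\mathring u+\int_{t_0}^tS_\gamma(t-s)[f(s)+\gamma Hu(s)]\,ds$ for all $t\in[t_0,\tau]$. *)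

theory Defs
  imports "HOL-Analysis.Analysis" "HOL-Library.Extended_Real"
begin

definition c0_semigroup :: "(real \<Rightarrow> 'x::banach \<Rightarrow> 'x) \<Rightarrow> bool" where
  "c0_semigroup S \<longleftrightarrow>
     (\<forall>t\<ge>0. bounded_linear (S t)) \<and>
     S 0 = id \<and>
     (\<forall>t\<ge>0. \<forall>s\<ge>0. S (t + s) = S t \<circ> S s) \<and>
     (\<forall>x. continuous_on {0..} (\<lambda>t. S t x))"

definition generates :: "'x set \<Rightarrow> ('x \<Rightarrow> 'x) \<Rightarrow> (real \<Rightarrow> 'x::banach \<Rightarrow> 'x) \<Rightarrow> bool" where
  "generates D G S \<longleftrightarrow>
     c0_semigroup S \<and>
     D = {x. \<exists>l. ((\<lambda>h. (1 / h) *\<^sub>R (S h x - x)) \<longlongrightarrow> l) (at_right 0)} \<and>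
     (\<forall>x\<in>D. ((\<lambda>h. (1 / h) *\<^sub>R (S h x - x)) \<longlongrightarrow> G x) (at_right 0))"

end

theory Submission
  imports Defs
begin

lemma cg_ubp:
  fixes L :: "'i \<Rightarrow> 'y::banach \<Rightarrow> 'z::banach"
  assumes lin: "\<And>i. i \<in> I \<Longrightarrow> linear (L i)"
    and clo: "\<And>i y z ys. i \<in> I \<Longrightarrow> ys \<longlonglongrightarrow> y \<Longrightarrow> (\<lambda>k. L i (ys k)) \<longlonglongrightarrow> z \<Longrightarrow> z = L i y"
    and bdd: "\<And>y. \<exists>B. \<forall>i\<in>I. norm (L i y) \<le> B"
  shows "\<exists>M\<ge>0. \<forall>i\<in>I. \<forall>y. norm (L i y) \<le> M * norm y"
proof -
  define E where "E n = {y. norm y \<le> real n \<and> (\<forall>i\<in>I. norm (L i y) \<le> real n)}" for n :: nat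
  have cov: "\<Union> (range (\<lambda>n. closure (E n))) = UNIV"
  proof (intro set_eqI iffI)
    fix y :: 'y
    obtain B where B: "\<forall>i\<in>I. norm (L i y) \<le> B" using bdd by blast
    obtain n :: nat where n: "max (norm y) B \<le> real n" using real_arch_simple by blast
    have "y \<in> E n" using B n unfolding E_def by force
    then show "y \<in> \<Union> (range (\<lambda>n. closure (E n)))" using closure_subset by blast
  qed auto
  have "\<exists>n. interior (closure (E n)) \<noteq> {}"
  proof (rule ccontr)
    assume "\<not> ?thesis"
    then have "euclidean interior_of \<Union> (range (\<lambda>n. closure (E n))) = {}"
      by (intro Baire_category_alt) (auto simp: completely_metrizable_space_euclidean)
    then show False using cov by simp
  qed
  then obtain n y0 where "y0 \<in> interior (closure (E n))" by blast
  then obtain r where r: "r > 0" "ball y0 r \<subseteq> closure (E n)"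
    using open_contains_ball open_interior interior_subset by (metis subset_trans)
  have lin0: "L i 0 = 0" if "i \<in> I" for i using lin[OF that] linear_0 by blast
  define K where "K = 2 * real n / r"
  have K0: "K \<ge> 0" using r by (simp add: K_def)
  have ap0: "\<exists>w. norm (z - w) < e \<and> (\<forall>i\<in>I. norm (L i w) \<le> real n)"
    if z: "norm z < r" and e: "e > 0" for z e
  proof -
    have "y0 + z \<in> closure (E n)" "y0 - z \<in> closure (E n)" using r z by (auto simp: dist_norm)
    then obtain a b where a: "a \<in> E n" "dist a (y0 + z) < e" and b: "b \<in> E n" "dist b (y0 - z) < e"
      using e by (meson closure_approachable)
    define w where "w = (1/2) *\<^sub>R (a - b)"
    have "z - w = (1/2) *\<^sub>R ((y0 + z - a) + (b - (y0 - z)))" by (simp add: w_def algebra_simps, simp flip: scaleR_add_left)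
    then have "norm (z - w) = (1/2) * norm ((y0 + z - a) + (b - (y0 - z)))" by simp
    also have "\<dots> \<le> (1/2) * (norm (y0 + z - a) + norm (b - (y0 - z)))"
      by (rule mult_left_mono[OF norm_triangle_ineq]) simp
    also have "\<dots> < e" using a b by (simp add: dist_norm norm_minus_commute)
    finally have 1: "norm (z - w) < e" .
    have "norm (L i w) \<le> real n" if i: "i \<in> I" for i
    proof -
      interpret linear "L i" using lin[OF i] .
      have "L i w = (1/2) *\<^sub>R (L i a - L i b)" by (simp add: w_def scale diff)
      then have "norm (L i w) \<le> (1/2) * (norm (L i a) + norm (L i b))"
        by (simp add: norm_triangle_ineq4)
      also have "\<dots> \<le> real n"
      proof -
        have "norm (L i a) \<le> real n" "norm (L i b) \<le> real n" using a(1) b(1) i unfolding E_def by auto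
        then show ?thesis by simp
      qed
      finally show ?thesis .
    qed
    with 1 show ?thesis by blast
  qed
  have ap: "\<exists>w. norm (z - w) < e \<and> (\<forall>i\<in>I. norm (L i w) \<le> K * norm z)"
    if e: "e > 0" for z e
  proof (cases "z = 0")
    case True
    then show ?thesis using e lin0 by (intro exI[of _ 0]) auto
  next
    case False
    define l where "l = 2 * norm z / r"
    have l0: "l > 0" using False r by (simp add: l_def)
    have "norm ((1/l) *\<^sub>R z) < r" using l0 r False by (simp add: l_def field_simps)
    then obtain w' where w': "norm ((1/l) *\<^sub>R z - w') < e / l" "\<forall>i\<in>I. norm (L i w') \<le> real n"
      using ap0 e l0 by (meson divide_pos_pos)
    have "norm (z - l *\<^sub>R w') = l * norm ((1/l) *\<^sub>R z - w')"
    proof -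
      have "z - l *\<^sub>R w' = l *\<^sub>R ((1/l) *\<^sub>R z - w')" using l0 by (simp add: algebra_simps)
      then show ?thesis using l0 by simp
    qed
    also have "\<dots> < e" using w'(1) l0 by (simp add: field_simps)
    finally have 1: "norm (z - l *\<^sub>R w') < e" .
    have "norm (L i (l *\<^sub>R w')) \<le> K * norm z" if i: "i \<in> I" for i
    proof -
      interpret linear "L i" using lin[OF i] .
      have "norm (L i (l *\<^sub>R w')) = l * norm (L i w')" using l0 by (simp add: scale)
      also have "\<dots> \<le> l * real n" using w'(2) i l0 by (simp add: mult_left_mono)
      also have "\<dots> = K * norm z" by (simp add: l_def K_def)
      finally show ?thesis .
    qed
    with 1 show ?thesis by blast
  qed
  then have "\<forall>z e. \<exists>w. e > 0 \<longrightarrow> norm (z - w) < e \<and> (\<forall>i\<in>I. norm (L i w) \<le> K * norm z)"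
    by blast
  then obtain W where W0: "\<forall>z e. e > 0 \<longrightarrow> norm (z - W z e) < e \<and> (\<forall>i\<in>I. norm (L i (W z e)) \<le> K * norm z)"
    by metis
  have W: "\<And>z e. e > 0 \<Longrightarrow> norm (z - W z e) < e \<and> (\<forall>i\<in>I. norm (L i (W z e)) \<le> K * norm z)"
    using W0 by blast
  have main: "norm (L i y) \<le> (2 * K) * norm y" if i: "i \<in> I" for i y
  proof (cases "y = 0")
    case True then show ?thesis using lin0 i by simp
  next
    case False
    interpret linear "L i" using lin[OF i] .
    define eps where "eps k = norm y / 2 ^ Suc k" for k :: nat
    have eps0: "eps k > 0" for k using False by (simp add: eps_def)
    define zs where "zs = rec_nat y (\<lambda>k z. z - W z (eps k))"
    have zs0: "zs 0 = y" and zsS: "zs (Suc k) = zs k - W (zs k) (eps k)" for k by (simp_all add: zs_def)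
    define ws where "ws k = W (zs k) (eps k)" for k
    have zbound: "norm (zs k) \<le> norm y / 2 ^ k" for k
    proof (induction k)
      case 0 then show ?case by (simp add: zs0)
    next
      case (Suc k)
      have "norm (zs (Suc k)) < eps k" using W[OF eps0[of k], of "zs k"] by (simp add: zsS)
      then show ?case by (simp add: eps_def)
    qed
    have wsb: "norm (L i (ws k)) \<le> K * norm y / 2 ^ k" for k
    proof -
      have "norm (L i (ws k)) \<le> K * norm (zs k)" using W[OF eps0[of k], of "zs k"] i by (simp add: ws_def)
      also have "\<dots> \<le> K * (norm y / 2 ^ k)" using zbound[of k] K0 by (rule mult_left_mono)
      finally show ?thesis by simp
    qed
    have psum: "(\<Sum>k<N. ws k) = y - zs N" for N
    proof -
      have "(\<Sum>k<N. ws k) = (\<Sum>k<N. zs k - zs (Suc k))" by (simp add: ws_def zsS)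
      also have "\<dots> = zs 0 - zs N" by (rule sum_lessThan_telescope')
      finally show ?thesis by (simp add: zs0)
    qed
    have "zs \<longlonglongrightarrow> 0"
    proof (rule tendsto_norm_zero_cancel, rule Lim_null_comparison[where g = "\<lambda>k. norm y / 2 ^ k"])
      show "\<forall>\<^sub>F k in sequentially. norm (norm (zs k)) \<le> norm y / 2 ^ k" using zbound by simp
      have "(\<lambda>k. norm y * (1/2) ^ k) \<longlonglongrightarrow> norm y * 0"
        by (intro tendsto_mult tendsto_const LIMSEQ_power_zero) auto
      then show "(\<lambda>k. norm y / 2 ^ k) \<longlonglongrightarrow> 0" by (simp add: power_divide)
    qed
    then have ps_lim: "(\<lambda>N. \<Sum>k<N. ws k) \<longlonglongrightarrow> y"
      unfolding psum using tendsto_diff[OF tendsto_const[of y], of zs 0] by simp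
    have gsum: "summable (\<lambda>k. K * norm y / 2 ^ k)" and gval: "(\<Sum>k. K * norm y / 2 ^ k) = 2 * K * norm y"
    proof -
      have "(\<lambda>k. (1/2::real) ^ k) sums 2" using geometric_sums[of "1/2::real"] by simp
      from sums_mult[OF this, of "K * norm y"]
      have "(\<lambda>k. K * norm y / 2 ^ k) sums (2 * K * norm y)" by (simp add: power_divide mult_ac)
      then show "summable (\<lambda>k. K * norm y / 2 ^ k)" "(\<Sum>k. K * norm y / 2 ^ k) = 2 * K * norm y"
        by (auto simp: sums_iff)
    qed
    have sL: "summable (\<lambda>k. L i (ws k))"
      by (rule summable_comparison_test[OF _ gsum]) (use wsb in auto)
    have "(\<lambda>N. \<Sum>k<N. L i (ws k)) \<longlonglongrightarrow> (\<Sum>k. L i (ws k))" using summable_LIMSEQ[OF sL] .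
    then have "(\<lambda>N. L i (\<Sum>k<N. ws k)) \<longlonglongrightarrow> (\<Sum>k. L i (ws k))" by (simp add: sum)
    then have eq: "(\<Sum>k. L i (ws k)) = L i y" using clo[OF i ps_lim] by blast
    have "norm (\<Sum>k. L i (ws k)) \<le> (\<Sum>k. K * norm y / 2 ^ k)"
      by (rule norm_suminf_le[OF wsb gsum])
    then show ?thesis using eq gval by simp
  qed
  show ?thesis using main K0 by (intro exI[of _ "2 * K"]) auto
qed

lemma c0_bl: "c0_semigroup S \<Longrightarrow> t \<ge> 0 \<Longrightarrow> bounded_linear (S t)"
  by (simp add: c0_semigroup_def)

lemma c0_0: "c0_semigroup S \<Longrightarrow> S 0 x = x"
  by (simp add: c0_semigroup_def)

lemma c0_add: "c0_semigroup S \<Longrightarrow> t \<ge> 0 \<Longrightarrow> s \<ge> 0 \<Longrightarrow> S (t + s) x = S t (S s x)"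
  by (simp add: c0_semigroup_def)

lemma c0_cont: "c0_semigroup S \<Longrightarrow> continuous_on {0..} (\<lambda>t. S t x)"
  by (simp add: c0_semigroup_def)

lemma c0_diff: "c0_semigroup S \<Longrightarrow> t \<ge> 0 \<Longrightarrow> S t (x - y) = S t x - S t y"
  using c0_bl linear_simps(2) by blast

lemma c0_plus: "c0_semigroup S \<Longrightarrow> t \<ge> 0 \<Longrightarrow> S t (x + y) = S t x + S t y"
  using c0_bl linear_simps(1) by blast

lemma c0_scale: "c0_semigroup S \<Longrightarrow> t \<ge> 0 \<Longrightarrow> S t (c *\<^sub>R x) = c *\<^sub>R S t x"
  using c0_bl linear_simps(5) by blast

lemma c0_zero: "c0_semigroup S \<Longrightarrow> t \<ge> 0 \<Longrightarrow> S t 0 = 0"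
  using c0_bl linear_simps(3) by blast

lemma sg_bound:
  assumes S: "c0_semigroup S"
  shows "\<exists>M\<ge>0. \<forall>t\<in>{0..c}. \<forall>x. norm (S t x) \<le> M * norm x"
proof (rule cg_ubp)
  fix i assume "i \<in> {0..c}"
  then show "linear (S i)" using c0_bl[OF S] bounded_linear.linear by auto
next
  fix i y z ys assume i: "i \<in> {0..c}" and ys: "ys \<longlonglongrightarrow> y" and z: "(\<lambda>k. S i (ys k)) \<longlonglongrightarrow> z"
  have "(\<lambda>k. S i (ys k)) \<longlonglongrightarrow> S i y"
    using bounded_linear.tendsto[OF c0_bl[OF S] ys] i by auto
  then show "z = S i y" using z LIMSEQ_unique by blast
next
  fix y
  have "compact ((\<lambda>t. S t y) ` {0..c})"
    by (rule compact_continuous_image[OF continuous_on_subset[OF c0_cont[OF S]]]) auto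
  then have "bounded ((\<lambda>t. S t y) ` {0..c})" by (rule compact_imp_bounded)
  then show "\<exists>B. \<forall>i\<in>{0..c}. norm (S i y) \<le> B" by (auto simp: bounded_iff)
qed

lemma sg_tendsto:
  assumes S: "c0_semigroup S"
    and al: "(\<alpha> \<longlongrightarrow> a) F" and ph: "(\<phi> \<longlongrightarrow> p) F" and pos: "eventually (\<lambda>z. \<alpha> z \<ge> 0) F"
  shows "((\<lambda>z. S (\<alpha> z) (\<phi> z)) \<longlongrightarrow> S a p) F"
proof (cases "F = bot")
  case True then show ?thesis by simp
next
  case False
  have a0: "a \<ge> 0" using tendsto_lowerbound[OF al pos False] .
  obtain M where M: "M \<ge> 0" "\<forall>t\<in>{0..a+1}. \<forall>x. norm (S t x) \<le> M * norm x"
    using sg_bound[OF S] by blast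
  have ev1: "eventually (\<lambda>z. \<alpha> z < a + 1) F" using order_tendstoD(2)[OF al, of "a+1"] by simp
  have T1: "((\<lambda>z. S (\<alpha> z) (\<phi> z - p)) \<longlongrightarrow> 0) F"
  proof (rule Lim_null_comparison)
    show "eventually (\<lambda>z. norm (S (\<alpha> z) (\<phi> z - p)) \<le> M * norm (\<phi> z - p)) F"
      using ev1 pos by eventually_elim (use M in auto)
    have "((\<lambda>z. norm (\<phi> z - p)) \<longlongrightarrow> 0) F"
      using tendsto_norm_zero[OF LIM_zero[OF ph]] .
    from tendsto_mult_right_zero[OF this, of M] show "((\<lambda>z. M * norm (\<phi> z - p)) \<longlongrightarrow> 0) F" .
  qed
  have T2: "((\<lambda>z. S (\<alpha> z) p) \<longlongrightarrow> S a p) F"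
    by (rule continuous_on_tendsto_compose[OF c0_cont[OF S] al]) (use a0 pos in auto)
  have "((\<lambda>z. S (\<alpha> z) (\<phi> z - p) + S (\<alpha> z) p) \<longlongrightarrow> 0 + S a p) F"
    by (rule tendsto_add[OF T1 T2])
  moreover have "eventually (\<lambda>z. S (\<alpha> z) (\<phi> z - p) + S (\<alpha> z) p = S (\<alpha> z) (\<phi> z)) F"
    using pos by eventually_elim (simp add: c0_diff[OF S])
  ultimately show ?thesis by (auto intro: Lim_transform_eventually)
qed

lemma sg_cont_on:
  assumes S: "c0_semigroup S" and al: "continuous_on K \<alpha>" and pos: "\<And>s. s \<in> K \<Longrightarrow> \<alpha> s \<ge> 0"
    and ph: "continuous_on K \<phi>"
  shows "continuous_on K (\<lambda>s. S (\<alpha> s) (\<phi> s))"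
  unfolding continuous_on_def
proof
  fix x assume x: "x \<in> K"
  have ev: "eventually (\<lambda>z. z \<in> K) (at x within K)" by (simp add: eventually_at_filter)
  show "((\<lambda>s. S (\<alpha> s) (\<phi> s)) \<longlongrightarrow> S (\<alpha> x) (\<phi> x)) (at x within K)"
    by (rule sg_tendsto[OF S]) (use al ph x ev pos in \<open>auto simp: continuous_on_def elim: eventually_mono\<close>)
qed

lemma gen_sg: "generates D A S \<Longrightarrow> c0_semigroup S"
  by (simp add: generates_def)

lemma gen_lim: "generates D A S \<Longrightarrow> x \<in> D \<Longrightarrow> ((\<lambda>h. (1/h) *\<^sub>R (S h x - x)) \<longlongrightarrow> A x) (at_right 0)"
  by (simp add: generates_def)

lemma gen_intro:
  assumes "generates D A S" "((\<lambda>h. (1/h) *\<^sub>R (S h x - x)) \<longlongrightarrow> l) (at_right 0)"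
  shows "x \<in> D \<and> A x = l"
proof -
  have xD: "x \<in> D" using assms unfolding generates_def by blast
  have "((\<lambda>h. (1/h) *\<^sub>R (S h x - x)) \<longlongrightarrow> A x) (at_right 0)" using gen_lim[OF assms(1) xD] .
  then have "A x = l" using assms(2) tendsto_unique trivial_limit_at_right_real by blast
  with xD show ?thesis by blast
qed

lemma ev_pos: "eventually (\<lambda>h::real. h > 0) (at_right 0)"
  by (simp add: eventually_at_filter)

lemma gen_diff:
  assumes G: "generates D A S" and x: "x \<in> D" and y: "y \<in> D"
  shows "x - y \<in> D \<and> A (x - y) = A x - A y"
proof (rule gen_intro[OF G])
  have S: "c0_semigroup S" using gen_sg[OF G] .
  have "((\<lambda>h. (1/h) *\<^sub>R (S h x - x) - (1/h) *\<^sub>R (S h y - y)) \<longlongrightarrow> A x - A y) (at_right 0)"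
    by (rule tendsto_diff[OF gen_lim[OF G x] gen_lim[OF G y]])
  moreover have "eventually (\<lambda>h. (1/h) *\<^sub>R (S h x - x) - (1/h) *\<^sub>R (S h y - y) = (1/h) *\<^sub>R (S h (x - y) - (x - y))) (at_right 0)"
    using ev_pos by eventually_elim (simp add: c0_diff[OF S] algebra_simps)
  ultimately show "((\<lambda>h. (1/h) *\<^sub>R (S h (x - y) - (x - y))) \<longlongrightarrow> A x - A y) (at_right 0)"
    by (auto intro: Lim_transform_eventually)
qed

lemma gen_zero:
  assumes G: "generates D A S"
  shows "0 \<in> D \<and> A 0 = 0"
proof (rule gen_intro[OF G])
  have S: "c0_semigroup S" using gen_sg[OF G] .
  have "eventually (\<lambda>h. 0 = (1/h) *\<^sub>R (S h 0 - 0)) (at_right 0)"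
    using ev_pos by eventually_elim (simp add: c0_zero[OF S])
  then show "((\<lambda>h. (1/h) *\<^sub>R (S h 0 - 0)) \<longlongrightarrow> 0) (at_right 0)"
    by (auto intro: Lim_transform_eventually)
qed

lemma vderiv_quot:
  fixes f :: "real \<Rightarrow> 'a::real_normed_vector"
  shows "(f has_vector_derivative f') (at x within s) \<longleftrightarrow>
         ((\<lambda>y. (1 / (y - x)) *\<^sub>R (f y - f x)) \<longlongrightarrow> f') (at x within s)"
proof -
  have eq: "eventually (\<lambda>y. norm ((1 / norm (y - x)) *\<^sub>R (f y - (f x + (y - x) *\<^sub>R f'))) =
          norm ((1 / (y - x)) *\<^sub>R (f y - f x) - f')) (at x within s)"
  proof -
    have "norm ((1 / norm (y - x)) *\<^sub>R (f y - (f x + (y - x) *\<^sub>R f'))) =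
          norm ((1 / (y - x)) *\<^sub>R (f y - f x) - f')" if "y \<noteq> x" for y
    proof -
      have e1: "f y - (f x + (y - x) *\<^sub>R f') = (f y - f x) - (y - x) *\<^sub>R f'" by (simp add: algebra_simps)
      have e2: "(1 / (y - x)) *\<^sub>R ((y - x) *\<^sub>R f') = f'" using that by simp
      have "(1 / (y - x)) *\<^sub>R (f y - f x) - f' = (1 / (y - x)) *\<^sub>R (f y - (f x + (y - x) *\<^sub>R f'))"
        unfolding e1 scaleR_right_diff_distrib e2 ..
      then show ?thesis by simp
    qed
    then show ?thesis by (simp add: eventually_at_filter)
  qed
  have "(f has_vector_derivative f') (at x within s) \<longleftrightarrow>
        ((\<lambda>y. norm ((1 / norm (y - x)) *\<^sub>R (f y - (f x + (y - x) *\<^sub>R f')))) \<longlongrightarrow> 0) (at x within s)"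
    unfolding has_vector_derivative_def has_derivative_within tendsto_norm_zero_iff
    by (simp add: bounded_linear_scaleR_left)
  also have "\<dots> \<longleftrightarrow> ((\<lambda>y. norm ((1 / (y - x)) *\<^sub>R (f y - f x) - f')) \<longlongrightarrow> 0) (at x within s)"
    using eq by (rule tendsto_cong)
  also have "\<dots> \<longleftrightarrow> ((\<lambda>y. (1 / (y - x)) *\<^sub>R (f y - f x)) \<longlongrightarrow> f') (at x within s)"
    by (simp add: tendsto_norm_zero_iff LIM_zero_iff)
  finally show ?thesis .
qed

lemma int_bound:
  fixes f :: "real \<Rightarrow> 'a::real_normed_vector"
  assumes "f integrable_on {a..b}" "a \<le> b" "0 \<le> B" "\<And>x. x \<in> {a..b} \<Longrightarrow> norm (f x) \<le> B"
  shows "norm (integral {a..b} f) \<le> B * (b - a)"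
  using has_integral_bound_real[of B "{}" f "integral {a..b} f" a b] assms by auto

lemma dist_pair_le: "dist (a::real, b::real) (c, d) \<le> \<bar>a - c\<bar> + \<bar>b - d\<bar>"
proof -
  have "dist (a, b) (c, d) = sqrt ((dist a c)\<^sup>2 + (dist b d)\<^sup>2)" by (rule dist_Pair_Pair)
  also have "\<dots> \<le> \<bar>dist a c\<bar> + \<bar>dist b d\<bar>" by (rule sqrt_sum_squares_le_sum_abs)
  finally show ?thesis by (simp add: dist_real_def)
qed

lemma avg_lim:
  fixes f :: "real \<Rightarrow> 'a::banach"
  assumes f: "continuous_on {a..b} f" and t: "a \<le> t" "t < b"
  shows "((\<lambda>h. (1/h) *\<^sub>R integral {t..t+h} f) \<longlongrightarrow> f t) (at_right 0)"
  unfolding tendsto_iff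
proof (intro allI impI)
  fix \<epsilon> :: real assume \<epsilon>: "\<epsilon> > 0"
  obtain d where d: "d > 0" "\<forall>x'\<in>{a..b}. dist x' t < d \<longrightarrow> dist (f x') (f t) < \<epsilon>/2"
    using f t \<epsilon> unfolding continuous_on_iff by (metis atLeastAtMost_iff half_gt_zero less_eq_real_def)
  have "eventually (\<lambda>h. h \<in> {0<..<min d (b - t)}) (at_right (0::real))"
    by (rule eventually_at_right_real) (use d t in auto)
  then show "eventually (\<lambda>h. dist ((1/h) *\<^sub>R integral {t..t+h} f) (f t) < \<epsilon>) (at_right 0)"
  proof eventually_elim
    case (elim h)
    then have h: "0 < h" "h < d" "t + h < b" by auto
    have fi: "f integrable_on {t..t+h}"
      by (rule integrable_continuous_real, rule continuous_on_subset[OF f]) (use h t in auto)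
    have "integral {t..t+h} (\<lambda>s. f s - f t) = integral {t..t+h} f - integral {t..t+h} (\<lambda>s. f t)"
      by (rule integral_diff[OF fi]) (simp add: integrable_const_ivl)
    also have "\<dots> = integral {t..t+h} f - h *\<^sub>R f t" using h by simp
    finally have "integral {t..t+h} (\<lambda>s. f s - f t) = integral {t..t+h} f - h *\<^sub>R f t" .
    moreover have "norm (integral {t..t+h} (\<lambda>s. f s - f t)) \<le> (\<epsilon>/2) * (t + h - t)"
    proof (rule int_bound)
      show "(\<lambda>s. f s - f t) integrable_on {t..t+h}" using fi by (intro integrable_diff) auto
      fix s assume s: "s \<in> {t..t+h}"
      then have "dist (f s) (f t) < \<epsilon>/2" using d h t by (auto simp: dist_real_def)
      then show "norm (f s - f t) \<le> \<epsilon>/2" by (simp add: dist_norm)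
    qed (use h \<epsilon> in auto)
    ultimately have bnd: "norm (integral {t..t+h} f - h *\<^sub>R f t) \<le> (\<epsilon>/2) * h" by simp
    have eq: "(1/h) *\<^sub>R integral {t..t+h} f - f t = (1/h) *\<^sub>R (integral {t..t+h} f - h *\<^sub>R f t)"
      using h by (simp add: algebra_simps)
    have "norm ((1/h) *\<^sub>R integral {t..t+h} f - f t) = (1/h) * norm (integral {t..t+h} f - h *\<^sub>R f t)"
      unfolding eq using h by simp
    also have "\<dots> \<le> (1/h) * ((\<epsilon>/2) * h)" using bnd h by (intro mult_left_mono) auto
    also have "\<dots> < \<epsilon>" using h \<epsilon> by simp
    finally show ?case by (simp add: dist_norm)
  qed
qed

lemma conv_cont:
  fixes K :: "real \<times> real \<Rightarrow> 'x::banach"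
  assumes K: "continuous_on ({0..T-t0} \<times> {t0..T}) K"
  shows "continuous_on {t0..T} (\<lambda>s. integral {t0..s} (\<lambda>\<sigma>. K (s - \<sigma>, \<sigma>)))"
proof -
  let ?C = "{0..T-t0} \<times> {t0..T}"
  let ?v = "\<lambda>s. integral {t0..s} (\<lambda>\<sigma>. K (s - \<sigma>, \<sigma>))"
  have kc: "continuous_on {a..b} (\<lambda>\<sigma>. K (s - \<sigma>, \<sigma>))" if "t0 \<le> a" "b \<le> s" "s \<le> T" for a b s
    by (rule continuous_on_compose2[OF K]) (use that in \<open>auto intro!: continuous_intros\<close>)
  have ki: "(\<lambda>\<sigma>. K (s - \<sigma>, \<sigma>)) integrable_on {a..b}" if "t0 \<le> a" "b \<le> s" "s \<le> T" for a b s
    using kc[OF that] integrable_continuous_real by blast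
  have "compact (K ` ?C)" by (rule compact_continuous_image[OF K]) (simp add: compact_Times)
  then have "bounded (K ` ?C)" by (rule compact_imp_bounded)
  then obtain B0 where B0: "\<forall>y\<in>K ` ?C. norm y \<le> B0" unfolding bounded_iff by blast
  define B where "B = max B0 0"
  have B: "B \<ge> 0" "\<And>p. p \<in> ?C \<Longrightarrow> norm (K p) \<le> B"
  proof -
    show "B \<ge> 0" by (simp add: B_def)
    fix p assume "p \<in> ?C"
    then have "norm (K p) \<le> B0" using B0 by blast
    then show "norm (K p) \<le> B" by (simp add: B_def le_max_iff_disj)
  qed
  have uc: "uniformly_continuous_on ?C K"
    by (rule compact_uniformly_continuous[OF K]) (simp add: compact_Times)
  have est: "norm (?v s' - ?v s) \<le> B * (s' - s) + e * (T - t0)"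
    if s: "t0 \<le> s" "s \<le> s'" "s' \<le> T" and e: "e > 0"
      and de: "\<forall>p\<in>?C. \<forall>p'\<in>?C. dist p' p < d \<longrightarrow> dist (K p') (K p) < e" and sd: "s' - s < d" for s s' e d
  proof -
    have "?v s' = integral {t0..s} (\<lambda>\<sigma>. K (s' - \<sigma>, \<sigma>)) + integral {s..s'} (\<lambda>\<sigma>. K (s' - \<sigma>, \<sigma>))"
      using Henstock_Kurzweil_Integration.integral_combine[where a=t0 and c=s and b=s' and f="\<lambda>\<sigma>. K (s' - \<sigma>, \<sigma>)"] ki[of t0 s' s'] s by simp
    then have eqv: "?v s' - ?v s = integral {s..s'} (\<lambda>\<sigma>. K (s' - \<sigma>, \<sigma>)) +
        integral {t0..s} (\<lambda>\<sigma>. K (s' - \<sigma>, \<sigma>) - K (s - \<sigma>, \<sigma>))"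
      using ki[of t0 s s'] ki[of t0 s s] s by (simp add: integral_diff)
    have b1: "norm (integral {s..s'} (\<lambda>\<sigma>. K (s' - \<sigma>, \<sigma>))) \<le> B * (s' - s)"
      by (rule int_bound) (use ki[of s s' s'] s B in auto)
    have b2: "norm (integral {t0..s} (\<lambda>\<sigma>. K (s' - \<sigma>, \<sigma>) - K (s - \<sigma>, \<sigma>))) \<le> e * (s - t0)"
    proof (rule int_bound)
      show "(\<lambda>\<sigma>. K (s' - \<sigma>, \<sigma>) - K (s - \<sigma>, \<sigma>)) integrable_on {t0..s}"
        using ki[of t0 s s'] ki[of t0 s s] s by (intro integrable_diff) auto
      fix \<sigma> assume \<sigma>: "\<sigma> \<in> {t0..s}"
      have "dist (s' - \<sigma>, \<sigma>) (s - \<sigma>, \<sigma>) \<le> \<bar>(s' - \<sigma>) - (s - \<sigma>)\<bar> + \<bar>\<sigma> - \<sigma>\<bar>" by (rule dist_pair_le)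
      then have "dist (s' - \<sigma>, \<sigma>) (s - \<sigma>, \<sigma>) < d" using sd s by simp
      then have "dist (K (s' - \<sigma>, \<sigma>)) (K (s - \<sigma>, \<sigma>)) < e"
        using de \<sigma> s by (auto simp: mem_Times_iff)
      then show "norm (K (s' - \<sigma>, \<sigma>) - K (s - \<sigma>, \<sigma>)) \<le> e" by (simp add: dist_norm)
    qed (use s e in auto)
    have "norm (?v s' - ?v s) \<le> B * (s' - s) + e * (s - t0)"
      unfolding eqv using b1 b2 norm_triangle_ineq[of "integral {s..s'} (\<lambda>\<sigma>. K (s' - \<sigma>, \<sigma>))"
          "integral {t0..s} (\<lambda>\<sigma>. K (s' - \<sigma>, \<sigma>) - K (s - \<sigma>, \<sigma>))"] by linarith
    also have "\<dots> \<le> B * (s' - s) + e * (T - t0)" using s e by (simp add: mult_left_mono)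
    finally show ?thesis .
  qed
  show ?thesis
    unfolding continuous_on_iff
  proof (intro ballI allI impI)
    fix s \<epsilon> assume s: "s \<in> {t0..T}" and \<epsilon>: "(\<epsilon>::real) > 0"
    define e where "e = \<epsilon> / (2 * (T - t0 + 1))"
    have Tt: "T - t0 \<ge> 0" using s by auto
    have e0: "e > 0" using \<epsilon> Tt by (simp add: e_def)
    obtain d where d: "d > 0" "\<forall>p\<in>?C. \<forall>p'\<in>?C. dist p' p < d \<longrightarrow> dist (K p') (K p) < e"
      using uc e0 unfolding uniformly_continuous_on_def by blast
    define \<delta> where "\<delta> = min d (\<epsilon> / (2 * (B + 1)))"
    have \<delta>0: "\<delta> > 0" using d \<epsilon> B by (simp add: \<delta>_def)
    have eT: "e * (T - t0) < \<epsilon> / 2"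
    proof -
      have "e * (T - t0 + 1) = \<epsilon> / 2" using Tt by (simp add: e_def field_simps)
      moreover have "e * (T - t0) = e * (T - t0 + 1) - e" by (simp add: algebra_simps)
      ultimately show ?thesis using e0 by linarith
    qed
    have gen: "norm (?v b - ?v a) < \<epsilon>" if ab: "t0 \<le> a" "a \<le> b" "b \<le> T" "b - a < \<delta>" for a b
    proof -
      have "norm (?v b - ?v a) \<le> B * (b - a) + e * (T - t0)"
        by (rule est[OF ab(1-3) e0 d(2)]) (use ab \<delta>_def in auto)
      also have "B * (b - a) \<le> B * (\<epsilon> / (2 * (B + 1)))"
        using ab \<delta>_def B by (intro mult_left_mono) auto
      also have "\<dots> \<le> \<epsilon> / 2" using B \<epsilon> by (simp add: field_simps)
      finally show ?thesis using eT by simp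
    qed
    show "\<exists>d>0. \<forall>s'\<in>{t0..T}. dist s' s < d \<longrightarrow> dist (?v s') (?v s) < \<epsilon>"
    proof (intro exI[of _ \<delta>] conjI ballI impI \<delta>0)
      fix s' assume s': "s' \<in> {t0..T}" and ds: "dist s' s < \<delta>"
      show "dist (?v s') (?v s) < \<epsilon>"
      proof (cases "s \<le> s'")
        case True
        then show ?thesis using gen[of s s'] s s' ds by (auto simp: dist_norm dist_real_def)
      next
        case False
        then show ?thesis using gen[of s' s] s s' ds by (auto simp: dist_norm dist_real_def norm_minus_commute)
      qed
    qed
  qed
qed

lemma sg_K_cont:
  assumes S: "c0_semigroup S" and g: "continuous_on UNIV g"
  shows "continuous_on ({0..c} \<times> X) (\<lambda>p. S (fst p) (g (snd p)))"
  by (rule sg_cont_on[OF S]) (auto intro!: continuous_intros continuous_on_compose2[OF g])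

lemma mild_cont:
  assumes S: "c0_semigroup S" and g: "continuous_on UNIV g"
  shows "continuous_on {t0..T} (\<lambda>s. S (s - t0) x + integral {t0..s} (\<lambda>\<sigma>. S (s - \<sigma>) (g \<sigma>)))"
proof (intro continuous_on_add)
  show "continuous_on {t0..T} (\<lambda>s. S (s - t0) x)"
    by (rule continuous_on_compose2[OF c0_cont[OF S]]) (auto intro!: continuous_intros)
  have "continuous_on {t0..T} (\<lambda>s. integral {t0..s} (\<lambda>\<sigma>. (\<lambda>p. S (fst p) (g (snd p))) (s - \<sigma>, \<sigma>)))"
    by (rule conv_cont[OF sg_K_cont[OF S g]])
  then show "continuous_on {t0..T} (\<lambda>s. integral {t0..s} (\<lambda>\<sigma>. S (s - \<sigma>) (g \<sigma>)))" by simp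
qed

lemma sg_dq:
  assumes S: "c0_semigroup S" and ab: "a \<ge> 0" "b \<ge> 0" "a \<noteq> b"
  shows "(1 / (b - a)) *\<^sub>R (S a x - S b x) = - S (min a b) ((1 / \<bar>a - b\<bar>) *\<^sub>R (S \<bar>a - b\<bar> x - x))"
proof (cases "a < b")
  case True
  have "S b x = S a (S (b - a) x)" using c0_add[OF S, of a "b - a" x] ab True by simp
  then show ?thesis using True ab
    by (simp add: c0_diff[OF S] c0_scale[OF S] algebra_simps min_def)
next
  case False
  then have ba: "b < a" using ab by simp
  have "S a x = S b (S (a - b) x)" using c0_add[OF S, of b "a - b" x] ab ba by simp
  moreover have "1 / (b - a) = - (1 / (a - b))" using divide_minus_right[of 1 "a - b"] by simp
  ultimately show ?thesis using ba ab
    by (simp add: c0_diff[OF S] c0_scale[OF S] algebra_simps min_def)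
qed

lemma gen_unique:
  fixes e :: "real \<Rightarrow> 'x::banach"
  assumes G: "generates D A S" and e: "continuous_on {t0..t1} e"
    and EA: "\<And>t. t \<in> {t0..t1} \<Longrightarrow> integral {t0..t} e \<in> D \<and> A (integral {t0..t} e) = e t"
    and t: "t \<in> {t0..t1}"
  shows "e t = 0"
proof -
  have S: "c0_semigroup S" using gen_sg[OF G] .
  define E where "E s = integral {t0..s} e" for s
  have Ed: "(E has_vector_derivative e s) (at s within {t0..t1})" if "s \<in> {t0..t1}" for s
    unfolding E_def by (rule integral_has_vector_derivative[OF e that])
  have Ec: "continuous_on {t0..t1} E"
    unfolding E_def by (rule indefinite_integral_continuous_1[OF integrable_continuous_real[OF e]])
  have E0: "E t = 0"
  proof -
    define \<psi> where "\<psi> s = S (t - s) (E s)" for s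
    have \<psi>c: "continuous_on {t0..t} \<psi>"
      unfolding \<psi>_def
      by (rule sg_cont_on[OF S]) (use t in \<open>auto intro!: continuous_intros continuous_on_subset[OF Ec]\<close>)
    have \<psi>d: "(\<psi> has_derivative (\<lambda>h. 0)) (at s within {t0..t})" if s: "s \<in> {t0..t}" for s
    proof -
      let ?F = "at s within {t0..t}"
      have evK: "eventually (\<lambda>y. y \<in> {t0..t} \<and> y \<noteq> s) ?F" by (simp add: eventually_at_filter)
      have id: "((\<lambda>y. y) \<longlongrightarrow> s) ?F" by (rule tendsto_ident_at)
      have "(E has_vector_derivative e s) ?F"
        by (rule has_vector_derivative_within_subset[OF Ed]) (use s t in auto)
      then have DQ: "((\<lambda>y. (1 / (y - s)) *\<^sub>R (E y - E s)) \<longlongrightarrow> e s) ?F" by (simp add: vderiv_quot)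
      have pos: "eventually (\<lambda>y. t - y \<ge> 0) ?F" using evK by eventually_elim auto
      have Ta: "((\<lambda>y. S (t - y) ((1 / (y - s)) *\<^sub>R (E y - E s) - e s)) \<longlongrightarrow> S (t - s) (e s - e s)) ?F"
        by (rule sg_tendsto[OF S _ _ pos]) (intro tendsto_intros DQ id)+
      have Tb: "((\<lambda>y. S (t - y) (e s)) \<longlongrightarrow> S (t - s) (e s)) ?F"
        by (rule sg_tendsto[OF S _ _ pos]) (intro tendsto_intros id)+
      have fl: "filterlim (\<lambda>y. \<bar>y - s\<bar>) (at_right 0) ?F"
        unfolding filterlim_at
      proof
        show "eventually (\<lambda>y. \<bar>y - s\<bar> \<in> {0<..} \<and> \<bar>y - s\<bar> \<noteq> 0) ?F"
          using evK by eventually_elim auto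
        have "((\<lambda>y. \<bar>y - s\<bar>) \<longlongrightarrow> \<bar>s - s\<bar>) ?F" by (intro tendsto_intros id)
        then show "((\<lambda>y. \<bar>y - s\<bar>) \<longlongrightarrow> 0) ?F" by simp
      qed
      have Es: "E s \<in> D \<and> A (E s) = e s" using EA[of s] s t unfolding E_def by auto
      have q: "((\<lambda>y. (1 / \<bar>y - s\<bar>) *\<^sub>R (S \<bar>y - s\<bar> (E s) - E s)) \<longlongrightarrow> A (E s)) ?F"
        using filterlim_compose[OF gen_lim[OF G] fl, of "E s"] Es by simp
      have pos2: "eventually (\<lambda>y. min (t - s) (t - y) \<ge> 0) ?F" using evK by eventually_elim (use s in auto)
      have Tc: "((\<lambda>y. - S (min (t - s) (t - y)) ((1 / \<bar>y - s\<bar>) *\<^sub>R (S \<bar>y - s\<bar> (E s) - E s)))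
           \<longlongrightarrow> - S (min (t - s) (t - s)) (A (E s))) ?F"
        by (intro tendsto_minus sg_tendsto[OF S _ q pos2]) (intro tendsto_intros id)+
      have lim: "((\<lambda>y. S (t - y) ((1 / (y - s)) *\<^sub>R (E y - E s) - e s) + S (t - y) (e s)
          + - S (min (t - s) (t - y)) ((1 / \<bar>y - s\<bar>) *\<^sub>R (S \<bar>y - s\<bar> (E s) - E s))) \<longlongrightarrow> 0) ?F"
      proof -
        have "S (t - s) (e s - e s) + S (t - s) (e s) + - S (min (t - s) (t - s)) (A (E s)) = 0"
          using Es s t by (simp add: c0_zero[OF S])
        then show ?thesis using tendsto_add[OF tendsto_add[OF Ta Tb] Tc] by simp
      qed
      have "eventually (\<lambda>y. S (t - y) ((1 / (y - s)) *\<^sub>R (E y - E s) - e s) + S (t - y) (e s)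
          + - S (min (t - s) (t - y)) ((1 / \<bar>y - s\<bar>) *\<^sub>R (S \<bar>y - s\<bar> (E s) - E s))
          = (1 / (y - s)) *\<^sub>R (\<psi> y - \<psi> s)) ?F"
        using evK
      proof eventually_elim
        case (elim y)
        then have y: "t0 \<le> y" "y \<le> t" "y \<noteq> s" by auto
        have dq: "(1 / (y - s)) *\<^sub>R (S (t - y) (E s) - S (t - s) (E s)) =
            - S (min (t - y) (t - s)) ((1 / \<bar>(t - y) - (t - s)\<bar>) *\<^sub>R (S \<bar>(t - y) - (t - s)\<bar> (E s) - E s))"
          using sg_dq[OF S, of "t - y" "t - s" "E s"] y s by simp
        have ab: "\<bar>(t - y) - (t - s)\<bar> = \<bar>y - s\<bar>" by simp
        have "(1 / (y - s)) *\<^sub>R (\<psi> y - \<psi> s) =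
            (1 / (y - s)) *\<^sub>R (S (t - y) (E y - E s)) + (1 / (y - s)) *\<^sub>R (S (t - y) (E s) - S (t - s) (E s))"
          using y by (simp add: \<psi>_def c0_diff[OF S] algebra_simps)
        also have "(1 / (y - s)) *\<^sub>R (S (t - y) (E y - E s)) =
            S (t - y) ((1 / (y - s)) *\<^sub>R (E y - E s) - e s) + S (t - y) (e s)"
          using y by (simp add: c0_diff[OF S] c0_scale[OF S])
        finally show ?case unfolding dq ab by (simp add: min.commute)
      qed
      with lim have "((\<lambda>y. (1 / (y - s)) *\<^sub>R (\<psi> y - \<psi> s)) \<longlongrightarrow> 0) ?F"
        by (rule Lim_transform_eventually)
      then have "(\<psi> has_vector_derivative 0) ?F" by (simp add: vderiv_quot)
      then show ?thesis by (simp add: has_vector_derivative_def)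
    qed
    have "\<psi> t = \<psi> t0"
      by (rule has_derivative_zero_unique_strong_interval[of "{}" t0 t \<psi>]) (use \<psi>c \<psi>d t in auto)
    moreover have "\<psi> t0 = 0" using t by (simp add: \<psi>_def E_def c0_zero[OF S])
    moreover have "\<psi> t = E t" by (simp add: \<psi>_def c0_0[OF S])
    ultimately show ?thesis by simp
  qed
  have "e t = A (E t)" using EA[OF t] by (simp add: E_def)
  also have "\<dots> = 0" using E0 gen_zero[OF G] by simp
  finally show ?thesis .
qed

lemma mild_integrated:
  fixes S :: "real \<Rightarrow> 'x::banach \<Rightarrow> 'x" and x :: 'x and g :: "real \<Rightarrow> 'x"
  assumes G: "generates D A S" and g: "continuous_on UNIV g" and t: "t0 \<le> t"
  defines "w \<equiv> \<lambda>s. S (s - t0) x + integral {t0..s} (\<lambda>\<sigma>. S (s - \<sigma>) (g \<sigma>))"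
  shows "integral {t0..t} w \<in> D \<and> A (integral {t0..t} w) = w t - x - integral {t0..t} g"
proof (rule gen_intro[OF G])
  have S: "c0_semigroup S" using gen_sg[OF G] .
  define T' where "T' = t + 1"
  have wc: "continuous_on {t0..T'} w" unfolding w_def by (rule mild_cont[OF S g])
  have wi: "w integrable_on {a..b}" if "t0 \<le> a" "b \<le> T'" for a b
    by (rule integrable_continuous_real, rule continuous_on_subset[OF wc]) (use that in auto)
  have kc: "continuous_on {a..b} (\<lambda>\<sigma>. S (s - \<sigma>) (g \<sigma>))" if "b \<le> s" for a b s
    by (rule sg_cont_on[OF S]) (use that in \<open>auto intro!: continuous_intros continuous_on_subset[OF g]\<close>)
  have ki: "(\<lambda>\<sigma>. S (s - \<sigma>) (g \<sigma>)) integrable_on {a..b}" if "b \<le> s" for a b s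
    using kc[OF that] integrable_continuous_real by blast
  define \<rho> where "\<rho> h s = integral {s..s+h} (\<lambda>\<sigma>. S (s + h - \<sigma>) (g \<sigma>))" for h s
  define R where "R h s = w (s + h) - S h (w s)" for h s
  have step1: "R h s = \<rho> h s" if h: "0 < h" and s: "t0 \<le> s" for h s
  proof -
    have a: "S h (S (s - t0) x) = S (s + h - t0) x"
      using c0_add[OF S, of h "s - t0" x] h s by (simp add: algebra_simps)
    have "S h (integral {t0..s} (\<lambda>\<sigma>. S (s - \<sigma>) (g \<sigma>))) = integral {t0..s} (\<lambda>\<sigma>. S h (S (s - \<sigma>) (g \<sigma>)))"
      using integral_linear[OF ki[of s s t0] c0_bl[OF S, of h]] h by (simp add: o_def)
    also have "\<dots> = integral {t0..s} (\<lambda>\<sigma>. S (s + h - \<sigma>) (g \<sigma>))"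
    proof (rule integral_cong)
      fix \<sigma> assume "\<sigma> \<in> {t0..s}"
      then show "S h (S (s - \<sigma>) (g \<sigma>)) = S (s + h - \<sigma>) (g \<sigma>)"
        using c0_add[OF S, of h "s - \<sigma>" "g \<sigma>"] h by (simp add: algebra_simps)
    qed
    finally have b: "S h (integral {t0..s} (\<lambda>\<sigma>. S (s - \<sigma>) (g \<sigma>))) = integral {t0..s} (\<lambda>\<sigma>. S (s + h - \<sigma>) (g \<sigma>))" .
    have c: "integral {t0..s+h} (\<lambda>\<sigma>. S (s + h - \<sigma>) (g \<sigma>)) =
        integral {t0..s} (\<lambda>\<sigma>. S (s + h - \<sigma>) (g \<sigma>)) + \<rho> h s"
      unfolding \<rho>_def using Henstock_Kurzweil_Integration.integral_combine[where a=t0 and c=s and b="s+h" and f="\<lambda>\<sigma>. S (s + h - \<sigma>) (g \<sigma>)"] ki[of "s+h" "s+h" t0] h s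
      by simp
    show ?thesis unfolding R_def w_def
      using h s a b c by (simp add: c0_plus[OF S])
  qed
  define F where "F = integral {t0..t} w"
  have Rc: "continuous_on {t0..t} (R h)" if h: "0 < h" "h \<le> 1" for h
  proof -
    have "continuous_on {t0..t} (\<lambda>s. w (s + h))"
      by (rule continuous_on_compose2[OF wc]) (use h in \<open>auto simp: T'_def intro!: continuous_intros\<close>)
    moreover have "continuous_on {t0..t} (\<lambda>s. S h (w s))"
      by (rule continuous_on_compose2[OF linear_continuous_on[OF c0_bl[OF S]] continuous_on_subset[OF wc]])
        (use h in \<open>auto simp: T'_def\<close>)
    ultimately show ?thesis unfolding R_def by (intro continuous_on_diff)
  qed
  have step2: "S h F - F = integral {t..t+h} w - integral {t0..t0+h} w - integral {t0..t} (R h)"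
    if h: "0 < h" "h \<le> 1" for h
  proof -
    have Ri: "R h integrable_on {t0..t}" using Rc[OF h] integrable_continuous_real by blast
    have wshi: "(\<lambda>s. w (s + h)) integrable_on {t0..t}"
    proof -
      have "continuous_on {t0..t} (\<lambda>s. w (s + h))"
        by (rule continuous_on_compose2[OF wc]) (use h in \<open>auto simp: T'_def intro!: continuous_intros\<close>)
      then show ?thesis using integrable_continuous_real by blast
    qed
    have "S h F = integral {t0..t} (\<lambda>s. S h (w s))"
      unfolding F_def using integral_linear[OF wi[of t0 t] c0_bl[OF S, of h]] h t by (simp add: o_def T'_def)
    also have "\<dots> = integral {t0..t} (\<lambda>s. w (s + h) - R h s)"
      by (rule integral_cong) (simp add: R_def)
    also have "\<dots> = integral {t0..t} (\<lambda>s. w (s + h)) - integral {t0..t} (R h)"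
      using wshi Ri by (rule integral_diff)
    also have "integral {t0..t} (\<lambda>s. w (s + h)) = integral {t0+h..t+h} w"
    proof -
      have "integral {t0..t} (\<lambda>s. w (s + h)) = integral {t0..t} (w \<circ> (+) h)"
        by (simp add: o_def add.commute)
      also have "\<dots> = integral {t0+h..t+h} w" by (rule integral_shift_Icc_real)
      finally show ?thesis .
    qed
    finally have 1: "S h F = integral {t0+h..t+h} w - integral {t0..t} (R h)" .
    have 2: "integral {t0..t0+h} w + integral {t0+h..t+h} w = integral {t0..t+h} w"
      by (rule Henstock_Kurzweil_Integration.integral_combine) (use h t wi[of t0 "t+h"] in \<open>auto simp: T'_def\<close>)
    have 3: "integral {t0..t} w + integral {t..t+h} w = integral {t0..t+h} w"
      by (rule Henstock_Kurzweil_Integration.integral_combine) (use h t wi[of t0 "t+h"] in \<open>auto simp: T'_def\<close>)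
    have c2: "integral {t0+h..t+h} w = integral {t0..t+h} w - integral {t0..t0+h} w"
      using 2 by (simp add: algebra_simps)
    have c3: "F = integral {t0..t+h} w - integral {t..t+h} w"
      using 3 unfolding F_def by (simp add: algebra_simps)
    have "S h F - F = (integral {t0+h..t+h} w - integral {t0..t} (R h)) - F" using 1 by simp
    also have "\<dots> = (integral {t0..t+h} w - integral {t0..t0+h} w - integral {t0..t} (R h))
        - (integral {t0..t+h} w - integral {t..t+h} w)" unfolding c2 c3 ..
    also have "\<dots> = integral {t..t+h} w - integral {t0..t0+h} w - integral {t0..t} (R h)"
      by (simp add: algebra_simps)
    finally show ?thesis .
  qed
  have L1: "((\<lambda>h. (1/h) *\<^sub>R integral {t..t+h} w) \<longlongrightarrow> w t) (at_right 0)"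
    by (rule avg_lim[OF wc]) (use t in \<open>auto simp: T'_def\<close>)
  have L2: "((\<lambda>h. (1/h) *\<^sub>R integral {t0..t0+h} w) \<longlongrightarrow> x) (at_right 0)"
  proof -
    have "((\<lambda>h. (1/h) *\<^sub>R integral {t0..t0+h} w) \<longlongrightarrow> w t0) (at_right 0)"
      by (rule avg_lim[OF wc]) (use t in \<open>auto simp: T'_def\<close>)
    moreover have "w t0 = x" by (simp add: w_def c0_0[OF S])
    ultimately show ?thesis by simp
  qed
  have L3: "((\<lambda>h. (1/h) *\<^sub>R integral {t0..t} (R h)) \<longlongrightarrow> integral {t0..t} g) (at_right 0)"
    unfolding tendsto_iff
  proof (intro allI impI)
    fix \<epsilon> :: real assume \<epsilon>: "\<epsilon> > 0"
    let ?C = "{0..1::real} \<times> {t0..T'}"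
    let ?K = "\<lambda>p. S (fst p) (g (snd p))"
    have uc: "uniformly_continuous_on ?C ?K"
      by (rule compact_uniformly_continuous[OF sg_K_cont[OF S g]]) (simp add: compact_Times)
    define e where "e = \<epsilon> / (2 * (t - t0 + 1))"
    have e0: "e > 0" using \<epsilon> t by (simp add: e_def)
    obtain d where d: "d > 0" "\<forall>p\<in>?C. \<forall>p'\<in>?C. dist p' p < d \<longrightarrow> dist (?K p') (?K p) < e"
      using uc e0 unfolding uniformly_continuous_on_def by blast
    have "eventually (\<lambda>h. h \<in> {0<..<min 1 (d/2)}) (at_right (0::real))"
      by (rule eventually_at_right_real) (use d in auto)
    then show "eventually (\<lambda>h. dist ((1/h) *\<^sub>R integral {t0..t} (R h)) (integral {t0..t} g) < \<epsilon>) (at_right 0)"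
    proof eventually_elim
      case (elim h)
      then have h: "0 < h" "h < 1" "2 * h < d" by auto
      have pt: "norm ((1/h) *\<^sub>R R h s - g s) \<le> e" if s: "s \<in> {t0..t}" for s
      proof -
        have "R h s = \<rho> h s" using step1 h s by auto
        have i1: "(\<lambda>\<sigma>. S (s + h - \<sigma>) (g \<sigma>)) integrable_on {s..s+h}" by (rule ki) simp
        have "(1/h) *\<^sub>R R h s - g s = (1/h) *\<^sub>R (\<rho> h s - h *\<^sub>R g s)"
          using \<open>R h s = \<rho> h s\<close> h by (simp add: algebra_simps)
        also have "\<rho> h s - h *\<^sub>R g s = integral {s..s+h} (\<lambda>\<sigma>. S (s + h - \<sigma>) (g \<sigma>) - g s)"
        proof -
          have "integral {s..s+h} (\<lambda>\<sigma>. S (s + h - \<sigma>) (g \<sigma>) - g s) = \<rho> h s - integral {s..s+h} (\<lambda>\<sigma>. g s)"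
            unfolding \<rho>_def by (rule integral_diff[OF i1]) (simp add: integrable_const_ivl)
          also have "\<dots> = \<rho> h s - h *\<^sub>R g s" using h by simp
          finally show ?thesis by simp
        qed
        finally have eq: "(1/h) *\<^sub>R R h s - g s = (1/h) *\<^sub>R integral {s..s+h} (\<lambda>\<sigma>. S (s + h - \<sigma>) (g \<sigma>) - g s)" .
        have "norm (integral {s..s+h} (\<lambda>\<sigma>. S (s + h - \<sigma>) (g \<sigma>) - g s)) \<le> e * (s + h - s)"
        proof (rule int_bound)
          show "(\<lambda>\<sigma>. S (s + h - \<sigma>) (g \<sigma>) - g s) integrable_on {s..s+h}"
            using i1 by (intro integrable_diff) auto
          fix \<sigma> assume \<sigma>: "\<sigma> \<in> {s..s+h}"
          have "dist (s + h - \<sigma>, \<sigma>) (0, s) \<le> \<bar>(s + h - \<sigma>) - 0\<bar> + \<bar>\<sigma> - s\<bar>" by (rule dist_pair_le)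
          then have "dist (s + h - \<sigma>, \<sigma>) (0, s) < d" using \<sigma> h by auto
          moreover have "(s + h - \<sigma>, \<sigma>) \<in> ?C" "(0, s) \<in> ?C" using \<sigma> s h by (auto simp: T'_def)
          ultimately have "dist (?K (s + h - \<sigma>, \<sigma>)) (?K (0, s)) < e" using d(2) by blast
          then show "norm (S (s + h - \<sigma>) (g \<sigma>) - g s) \<le> e" by (simp add: dist_norm c0_0[OF S])
        qed (use h e0 in auto)
        then show ?thesis unfolding eq using h by (simp add: divide_le_eq mult.commute)
      qed
      have Ri: "R h integrable_on {t0..t}" using Rc[of h] h integrable_continuous_real by auto
      have gi: "g integrable_on {t0..t}" using integrable_continuous_real continuous_on_subset[OF g] by blast
      have "(1/h) *\<^sub>R integral {t0..t} (R h) - integral {t0..t} g = integral {t0..t} (\<lambda>s. (1/h) *\<^sub>R R h s - g s)"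
        using Ri gi by (simp add: integral_diff integrable_cmul)
      moreover have "norm (integral {t0..t} (\<lambda>s. (1/h) *\<^sub>R R h s - g s)) \<le> e * (t - t0)"
        by (rule int_bound) (use pt Ri gi t e0 in \<open>auto intro!: integrable_diff integrable_cmul\<close>)
      moreover have "e * (t - t0) < \<epsilon>"
      proof -
        have "e * (t - t0 + 1) = \<epsilon> / 2" using t by (simp add: e_def field_simps)
        moreover have "e * (t - t0) = e * (t - t0 + 1) - e" by (simp add: algebra_simps)
        ultimately show ?thesis using e0 \<epsilon> by linarith
      qed
      ultimately show ?case by (simp add: dist_norm)
    qed
  qed
  have "((\<lambda>h. (1/h) *\<^sub>R integral {t..t+h} w - (1/h) *\<^sub>R integral {t0..t0+h} w - (1/h) *\<^sub>R integral {t0..t} (R h))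
      \<longlongrightarrow> w t - x - integral {t0..t} g) (at_right 0)"
    by (intro tendsto_diff L1 L2 L3)
  moreover have "eventually (\<lambda>h. (1/h) *\<^sub>R integral {t..t+h} w - (1/h) *\<^sub>R integral {t0..t0+h} w - (1/h) *\<^sub>R integral {t0..t} (R h)
      = (1/h) *\<^sub>R (S h F - F)) (at_right 0)"
  proof -
    have "eventually (\<lambda>h. h \<in> {0<..<1}) (at_right (0::real))" by (rule eventually_at_right_real) simp
    then show ?thesis
    proof eventually_elim
      case (elim h)
      then have eq: "S h F - F = integral {t..t+h} w - integral {t0..t0+h} w - integral {t0..t} (R h)"
        using step2[of h] by auto
      show ?case by (simp only: eq scaleR_diff_right)
    qed
  qed
  ultimately show "((\<lambda>h. (1/h) *\<^sub>R (S h (integral {t0..t} w) - integral {t0..t} w)) \<longlongrightarrow> w t - x - integral {t0..t} g) (at_right 0)"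
    unfolding F_def by (rule Lim_transform_eventually)
qed

lemma rng_basic:
  fixes \<iota> :: "'y::real_normed_vector \<Rightarrow> 'x::real_normed_vector"
  assumes bl: "bounded_linear \<iota>" and inj: "inj \<iota>"
  shows rng_ii: "inv \<iota> (\<iota> y) = y"
    and rng_ri: "x \<in> range \<iota> \<Longrightarrow> \<iota> (inv \<iota> x) = x"
    and rng_add: "a \<in> range \<iota> \<Longrightarrow> b \<in> range \<iota> \<Longrightarrow> a + b \<in> range \<iota> \<and> inv \<iota> (a + b) = inv \<iota> a + inv \<iota> b"
    and rng_diff: "a \<in> range \<iota> \<Longrightarrow> b \<in> range \<iota> \<Longrightarrow> a - b \<in> range \<iota> \<and> inv \<iota> (a - b) = inv \<iota> a - inv \<iota> b"
    and rng_zero: "0 \<in> range \<iota> \<and> inv \<iota> 0 = 0"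
proof -
  show ii: "inv \<iota> (\<iota> y) = y" for y using inj by (simp add: inv_f_f)
  show "x \<in> range \<iota> \<Longrightarrow> \<iota> (inv \<iota> x) = x" by (simp add: f_inv_into_f)
  show "a \<in> range \<iota> \<Longrightarrow> b \<in> range \<iota> \<Longrightarrow> a + b \<in> range \<iota> \<and> inv \<iota> (a + b) = inv \<iota> a + inv \<iota> b"
  proof -
    assume "a \<in> range \<iota>" "b \<in> range \<iota>"
    then obtain a' b' where ab: "a = \<iota> a'" "b = \<iota> b'" by blast
    have "a + b = \<iota> (a' + b')" using ab linear_simps(1)[OF bl] by simp
    then show ?thesis using ab ii by simp
  qed
  show "a \<in> range \<iota> \<Longrightarrow> b \<in> range \<iota> \<Longrightarrow> a - b \<in> range \<iota> \<and> inv \<iota> (a - b) = inv \<iota> a - inv \<iota> b"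
  proof -
    assume "a \<in> range \<iota>" "b \<in> range \<iota>"
    then obtain a' b' where ab: "a = \<iota> a'" "b = \<iota> b'" by blast
    have "a - b = \<iota> (a' - b')" using ab linear_simps(2)[OF bl] by simp
    then show ?thesis using ab ii by simp
  qed
  have "0 = \<iota> 0" using linear_simps(3)[OF bl] by simp
  then show "0 \<in> range \<iota> \<and> inv \<iota> 0 = 0" using ii by (metis rangeI)
qed

lemma conv_step:
  fixes S :: "real \<Rightarrow> 'x::banach \<Rightarrow> 'x"
  assumes S: "c0_semigroup S" and \<phi>: "continuous_on UNIV \<phi>" and a: "t0 \<le> a" and h: "0 \<le> h"
  shows "integral {t0..a+h} (\<lambda>\<sigma>. S (a + h - \<sigma>) (\<phi> \<sigma>)) =
         S h (integral {t0..a} (\<lambda>\<sigma>. S (a - \<sigma>) (\<phi> \<sigma>))) + integral {a..a+h} (\<lambda>\<sigma>. S (a + h - \<sigma>) (\<phi> \<sigma>))"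
proof -
  have ki: "(\<lambda>\<sigma>. S (s - \<sigma>) (\<phi> \<sigma>)) integrable_on {p..q}" if "q \<le> s" for p q s
  proof -
    have "continuous_on {p..q} (\<lambda>\<sigma>. S (s - \<sigma>) (\<phi> \<sigma>))"
      by (rule sg_cont_on[OF S]) (use that in \<open>auto intro!: continuous_intros continuous_on_subset[OF \<phi>]\<close>)
    then show ?thesis using integrable_continuous_real by blast
  qed
  have "S h (integral {t0..a} (\<lambda>\<sigma>. S (a - \<sigma>) (\<phi> \<sigma>))) = integral {t0..a} (\<lambda>\<sigma>. S h (S (a - \<sigma>) (\<phi> \<sigma>)))"
    using integral_linear[OF ki[of a a t0] c0_bl[OF S h]] by (simp add: o_def)
  also have "\<dots> = integral {t0..a} (\<lambda>\<sigma>. S (a + h - \<sigma>) (\<phi> \<sigma>))"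
  proof (rule integral_cong)
    fix \<sigma> assume "\<sigma> \<in> {t0..a}"
    then show "S h (S (a - \<sigma>) (\<phi> \<sigma>)) = S (a + h - \<sigma>) (\<phi> \<sigma>)"
      using c0_add[OF S, of h "a - \<sigma>" "\<phi> \<sigma>"] h by (simp add: algebra_simps)
  qed
  finally have b: "S h (integral {t0..a} (\<lambda>\<sigma>. S (a - \<sigma>) (\<phi> \<sigma>))) = integral {t0..a} (\<lambda>\<sigma>. S (a + h - \<sigma>) (\<phi> \<sigma>))" .
  have c: "integral {t0..a} (\<lambda>\<sigma>. S (a + h - \<sigma>) (\<phi> \<sigma>)) + integral {a..a+h} (\<lambda>\<sigma>. S (a + h - \<sigma>) (\<phi> \<sigma>)) =
      integral {t0..a+h} (\<lambda>\<sigma>. S (a + h - \<sigma>) (\<phi> \<sigma>))"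
    by (rule Henstock_Kurzweil_Integration.integral_combine) (use a h ki[of "a+h" "a+h" t0] in auto)
  show ?thesis using b c by simp
qed

lemma conv_shift:
  fixes S :: "real \<Rightarrow> 'x::banach \<Rightarrow> 'x"
  assumes S: "c0_semigroup S" and \<phi>: "continuous_on UNIV \<phi>" and a: "t0 \<le> a" and h: "0 \<le> h"
  shows "integral {t0..a+h} (\<lambda>\<sigma>. S (a + h - \<sigma>) (\<phi> \<sigma>)) =
         integral {t0..t0+h} (\<lambda>\<sigma>. S (a + h - \<sigma>) (\<phi> \<sigma>)) + integral {t0..a} (\<lambda>\<sigma>. S (a - \<sigma>) (\<phi> (\<sigma> + h)))"
proof -
  let ?f = "\<lambda>\<sigma>. S (a + h - \<sigma>) (\<phi> \<sigma>)"
  have ki: "?f integrable_on {t0..a+h}"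
  proof -
    have "continuous_on {t0..a+h} ?f"
      by (rule sg_cont_on[OF S]) (auto intro!: continuous_intros continuous_on_subset[OF \<phi>])
    then show ?thesis using integrable_continuous_real by blast
  qed
  have c: "integral {t0..t0+h} ?f + integral {t0+h..a+h} ?f = integral {t0..a+h} ?f"
    by (rule Henstock_Kurzweil_Integration.integral_combine) (use a h ki in auto)
  have "integral {t0..a} (?f \<circ> (+) h) = integral {t0+h..a+h} ?f" by (rule integral_shift_Icc_real)
  moreover have "integral {t0..a} (?f \<circ> (+) h) = integral {t0..a} (\<lambda>\<sigma>. S (a - \<sigma>) (\<phi> (\<sigma> + h)))"
    by (rule integral_cong) (simp add: add.commute)
  ultimately show ?thesis using c by simp
qed

lemma ycont:
  fixes \<iota> :: "'y::banach \<Rightarrow> 'x::banach" and S :: "real \<Rightarrow> 'x \<Rightarrow> 'x" and \<eta> :: "real \<Rightarrow> real"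
    and fe :: "real \<Rightarrow> 'x"
  assumes bl: "bounded_linear \<iota>" and inj: "inj \<iota>" and S: "c0_semigroup S"
    and S_Y: "\<forall>t\<ge>0. \<forall>y. S t (\<iota> y) \<in> range \<iota>"
    and S_Y_cont: "\<forall>y. continuous_on {0..} (\<lambda>t. inv \<iota> (S t (\<iota> y)))"
    and eta_pos: "\<forall>\<delta>>0. \<eta> \<delta> > 0"
    and eta_lim: "(\<eta> \<longlongrightarrow> 0) (at_right 0)"
    and smoothing: "\<forall>s\<^sub>0 s\<^sub>1 (\<phi>::real \<Rightarrow> 'x). 0 \<le> s\<^sub>0 \<longrightarrow> s\<^sub>0 < s\<^sub>1 \<longrightarrow> continuous_on {s\<^sub>0..s\<^sub>1} \<phi> \<longrightarrow>
          integral {s\<^sub>0..s\<^sub>1} (\<lambda>s. S (s\<^sub>1 - s) (\<phi> s)) \<in> range \<iota> \<and>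
          norm (inv \<iota> (integral {s\<^sub>0..s\<^sub>1} (\<lambda>s. S (s\<^sub>1 - s) (\<phi> s))))
            \<le> \<eta> (s\<^sub>1 - s\<^sub>0) * (SUP s\<in>{s\<^sub>0..s\<^sub>1}. norm (\<phi> s))"
    and t0: "0 \<le> t0" "t0 < \<tau>" and fe: "continuous_on UNIV fe" and fe_left: "\<And>\<sigma>. \<sigma> \<le> t0 \<Longrightarrow> fe \<sigma> = fe t0"
  shows "\<forall>s\<in>{t0..\<tau>}. integral {t0..s} (\<lambda>\<sigma>. S (s - \<sigma>) (fe \<sigma>)) \<in> range \<iota>"
    and "continuous_on {t0..\<tau>} (\<lambda>s. inv \<iota> (integral {t0..s} (\<lambda>\<sigma>. S (s - \<sigma>) (fe \<sigma>))))"
proof -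
  note ii = rng_ii[OF bl inj] and ri = rng_ri[OF bl inj] and radd = rng_add[OF bl inj]
    and rdiff = rng_diff[OF bl inj] and rzero = rng_zero[OF bl inj]
  define conv where "conv \<phi> s = integral {t0..s} (\<lambda>\<sigma>. S (s - \<sigma>) (\<phi> \<sigma>))" for \<phi> :: "real \<Rightarrow> 'x" and s
  define v where "v = conv fe"
  have sm: "integral {s0..s1} (\<lambda>\<sigma>. S (s1 - \<sigma>) (\<phi> \<sigma>)) \<in> range \<iota> \<and>
      norm (inv \<iota> (integral {s0..s1} (\<lambda>\<sigma>. S (s1 - \<sigma>) (\<phi> \<sigma>)))) \<le> \<eta> (s1 - s0) * B"
    if "0 \<le> s0" "s0 < s1" "continuous_on {s0..s1} \<phi>" "\<And>\<sigma>. \<sigma> \<in> {s0..s1} \<Longrightarrow> norm (\<phi> \<sigma>) \<le> B" for s0 s1 \<phi> B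
  proof -
    have 1: "integral {s0..s1} (\<lambda>\<sigma>. S (s1 - \<sigma>) (\<phi> \<sigma>)) \<in> range \<iota> \<and>
          norm (inv \<iota> (integral {s0..s1} (\<lambda>\<sigma>. S (s1 - \<sigma>) (\<phi> \<sigma>)))) \<le> \<eta> (s1 - s0) * (SUP s\<in>{s0..s1}. norm (\<phi> s))"
      using smoothing that(1-3) by blast
    have "(SUP s\<in>{s0..s1}. norm (\<phi> s)) \<le> B" by (rule cSUP_least) (use that in auto)
    moreover have "\<eta> (s1 - s0) > 0" using eta_pos that by auto
    ultimately show ?thesis using 1 by (meson mult_left_mono order_trans less_imp_le)
  qed
  have ci: "(\<lambda>\<sigma>. S (s - \<sigma>) (\<phi> \<sigma>)) integrable_on {p..q}" if "q \<le> s" "continuous_on UNIV \<phi>" for p q s \<phi>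
  proof -
    have "continuous_on {p..q} (\<lambda>\<sigma>. S (s - \<sigma>) (\<phi> \<sigma>))"
      by (rule sg_cont_on[OF S]) (use that in \<open>auto intro!: continuous_intros continuous_on_subset[OF that(2)]\<close>)
    then show ?thesis using integrable_continuous_real by blast
  qed
  have "compact (fe ` {t0-1..\<tau>})" by (rule compact_continuous_image[OF continuous_on_subset[OF fe]]) auto
  then have "bounded (fe ` {t0-1..\<tau>})" by (rule compact_imp_bounded)
  then obtain Bf0 where Bf0: "\<forall>y\<in>fe ` {t0-1..\<tau>}. norm y \<le> Bf0" unfolding bounded_iff by blast
  define Bf where "Bf = max Bf0 0"
  have Bf: "Bf \<ge> 0" "\<And>\<sigma>. \<sigma> \<in> {t0-1..\<tau>} \<Longrightarrow> norm (fe \<sigma>) \<le> Bf"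
  proof -
    show "Bf \<ge> 0" by (simp add: Bf_def)
    fix \<sigma> assume "\<sigma> \<in> {t0-1..\<tau>}"
    then have "norm (fe \<sigma>) \<le> Bf0" using Bf0 by blast
    then show "norm (fe \<sigma>) \<le> Bf" by (simp add: Bf_def le_max_iff_disj)
  qed
  have conv_rng: "conv \<phi> s \<in> range \<iota>"
    if "t0 \<le> s" "continuous_on UNIV \<phi>" for s \<phi>
  proof (cases "s = t0")
    case True then show ?thesis using rzero by (simp add: conv_def)
  next
    case False
    have "compact (\<phi> ` {t0..s})" by (rule compact_continuous_image[OF continuous_on_subset[OF that(2)]]) auto
    then have "bounded (\<phi> ` {t0..s})" by (rule compact_imp_bounded)
    then obtain B where "\<forall>y\<in>\<phi> ` {t0..s}. norm y \<le> B" unfolding bounded_iff by blast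
    then show ?thesis unfolding conv_def
      using sm[of t0 s \<phi> B] that False t0 continuous_on_subset[OF that(2)] by auto
  qed
  show vr: "\<forall>s\<in>{t0..\<tau>}. integral {t0..s} (\<lambda>\<sigma>. S (s - \<sigma>) (fe \<sigma>)) \<in> range \<iota>"
    using conv_rng[OF _ fe] by (auto simp: conv_def)
  define Sh where "Sh t y = inv \<iota> (S t (\<iota> y))" for t y
  have Sh_i: "\<iota> (Sh t y) = S t (\<iota> y)" if "t \<ge> 0" for t y using ri S_Y that by (simp add: Sh_def)
  have Sh0: "Sh 0 y = y" for y by (simp add: Sh_def c0_0[OF S] ii)
  obtain MY where MY: "MY \<ge> 0" "\<forall>t\<in>{0..\<tau>-t0}. \<forall>y. norm (Sh t y) \<le> MY * norm y"
  proof -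
    have "\<exists>M\<ge>0. \<forall>t\<in>{0..\<tau>-t0}. \<forall>y. norm (Sh t y) \<le> M * norm y"
    proof (rule cg_ubp)
      fix t assume t: "t \<in> {0..\<tau>-t0}"
      show "linear (Sh t)"
      proof (rule linearI)
        fix a b
        have "Sh t (a + b) = inv \<iota> (S t (\<iota> a) + S t (\<iota> b))"
          using t by (simp add: Sh_def linear_simps(1)[OF bl] c0_plus[OF S])
        also have "\<dots> = Sh t a + Sh t b" using radd S_Y t by (simp add: Sh_def)
        finally show "Sh t (a + b) = Sh t a + Sh t b" .
        fix c :: real
        have "\<iota> (Sh t (c *\<^sub>R a)) = \<iota> (c *\<^sub>R Sh t a)"
          using t by (simp add: Sh_i linear_simps(5)[OF bl] c0_scale[OF S])
        then show "Sh t (c *\<^sub>R a) = c *\<^sub>R Sh t a" using inj by (meson injD)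
      qed
    next
      fix t y z ys assume t: "t \<in> {0..\<tau>-t0}" and ys: "ys \<longlonglongrightarrow> y" and z: "(\<lambda>k. Sh t (ys k)) \<longlonglongrightarrow> z"
      have "(\<lambda>k. S t (\<iota> (ys k))) \<longlonglongrightarrow> S t (\<iota> y)"
        using bounded_linear.tendsto[OF c0_bl[OF S] bounded_linear.tendsto[OF bl ys]] t by auto
      moreover have "(\<lambda>k. \<iota> (Sh t (ys k))) \<longlonglongrightarrow> \<iota> z" using bounded_linear.tendsto[OF bl z] .
      ultimately have "\<iota> z = S t (\<iota> y)" using Sh_i t LIMSEQ_unique by auto
      then show "z = Sh t y" using ii by (simp add: Sh_def) (metis ii)
    next
      fix y
      have "compact ((\<lambda>t. Sh t y) ` {0..\<tau>-t0})"
        unfolding Sh_def by (rule compact_continuous_image[OF continuous_on_subset[OF S_Y_cont[rule_format]]]) auto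
      then have "bounded ((\<lambda>t. Sh t y) ` {0..\<tau>-t0})" by (rule compact_imp_bounded)
      then show "\<exists>B. \<forall>t\<in>{0..\<tau>-t0}. norm (Sh t y) \<le> B" by (auto simp: bounded_iff)
    qed
    then show ?thesis using that by blast
  qed
  define x0 where "x0 = fe t0"
  define f0 where "f0 \<sigma> = fe \<sigma> - x0" for \<sigma>
  have f0c: "continuous_on UNIV f0" unfolding f0_def by (intro continuous_intros fe)
  have f0_left: "f0 \<sigma> = 0" if "\<sigma> \<le> t0" for \<sigma> using fe_left[OF that] by (simp add: f0_def x0_def)
  have x0c: "continuous_on UNIV (\<lambda>\<sigma>::real. x0)" by simp
  have vsplit: "v s = conv (\<lambda>_. x0) s + conv f0 s" if "t0 \<le> s" for s
  proof -
    have "v s = integral {t0..s} (\<lambda>\<sigma>. S (s - \<sigma>) x0 + S (s - \<sigma>) (f0 \<sigma>))"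
      unfolding v_def conv_def by (rule integral_cong) (simp add: f0_def c0_plus[OF S, symmetric])
    also have "\<dots> = conv (\<lambda>_. x0) s + conv f0 s"
      unfolding conv_def by (rule Henstock_Kurzweil_Integration.integral_add) (use ci[OF _ x0c] ci[OF _ f0c] in auto)
    finally show ?thesis .
  qed
  show "continuous_on {t0..\<tau>} (\<lambda>s. inv \<iota> (integral {t0..s} (\<lambda>\<sigma>. S (s - \<sigma>) (fe \<sigma>))))"
    unfolding continuous_on_iff
  proof (intro ballI allI impI)
    fix s0 \<epsilon> assume s0: "s0 \<in> {t0..\<tau>}" and \<epsilon>: "(\<epsilon>::real) > 0"
    let ?vh = "\<lambda>s. inv \<iota> (v s)"
    have vr': "v s \<in> range \<iota>" if "s \<in> {t0..\<tau>}" for s using vr that by (simp add: v_def conv_def)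
    define P where "P = Bf + MY * norm x0 + 1"
    define e1 where "e1 = \<epsilon> / (4 * P)"
    have e1: "e1 > 0" "e1 * Bf \<le> \<epsilon> / 4" "MY * (e1 * norm x0) \<le> \<epsilon> / 4"
    proof -
      have "MY * norm x0 \<ge> 0" using MY by simp
      then have pos: "P > 0" using Bf unfolding P_def by linarith
      then show "e1 > 0" using \<epsilon> by (simp add: e1_def)
      have "e1 * P = \<epsilon> / 4" using pos by (simp add: e1_def)
      then have "e1 * (Bf + MY * norm x0 + 1) = \<epsilon> / 4" by (simp add: P_def)
      moreover have "e1 * Bf \<ge> 0" "MY * (e1 * norm x0) \<ge> 0" "e1 \<ge> 0"
        using \<epsilon> Bf MY pos by (simp_all add: e1_def)
      ultimately show "e1 * Bf \<le> \<epsilon> / 4" "MY * (e1 * norm x0) \<le> \<epsilon> / 4"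
        by (simp_all add: algebra_simps)
    qed
    obtain d1 where d1: "d1 > 0" "\<And>h. 0 < h \<Longrightarrow> h < d1 \<Longrightarrow> \<eta> h < e1"
    proof -
      have "eventually (\<lambda>h. dist (\<eta> h) 0 < e1) (at_right 0)" using eta_lim e1(1) tendsto_iff by blast
      then obtain b where b: "b > 0" "\<forall>h>0. h < b \<longrightarrow> dist (\<eta> h) 0 < e1"
        unfolding eventually_at_right_field by auto
      show ?thesis
      proof (rule that[of b])
        show "b > 0" using b by simp
        fix h :: real assume "0 < h" "h < b"
        then have "\<bar>\<eta> h\<bar> < e1" using b by (auto simp: dist_real_def)
        then show "\<eta> h < e1" by linarith
      qed
    qed
    obtain d2 where d2: "d2 > 0" "\<And>h. 0 \<le> h \<Longrightarrow> h < d2 \<Longrightarrow> norm (Sh h (?vh s0) - ?vh s0) < \<epsilon> / 4"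
    proof -
      have "continuous_on {0..} (\<lambda>t. Sh t (?vh s0))" unfolding Sh_def using S_Y_cont by blast
      then obtain d where "d > 0" "\<forall>h\<in>{0..}. dist h 0 < d \<longrightarrow> dist (Sh h (?vh s0)) (Sh 0 (?vh s0)) < \<epsilon> / 4"
        unfolding continuous_on_iff using \<epsilon> by (metis atLeast_iff order_refl zero_less_divide_iff zero_less_numeral)
      then show ?thesis using that[of d] by (auto simp: dist_norm Sh0)
    qed
    define P2 where "P2 = \<bar>\<eta> (s0 - t0)\<bar> + 1"
    have pos2: "P2 > 0" unfolding P2_def by (simp add: add_pos_nonneg)
    define e2 where "e2 = \<epsilon> / (4 * P2)"
    have e2: "e2 > 0" using \<epsilon> pos2 by (simp add: e2_def)
    have e2b: "\<eta> (s0 - t0) * e2 < \<epsilon> / 4"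
    proof -
      have "e2 * P2 = \<epsilon> / 4" using pos2 by (simp add: e2_def)
      then have "e2 * (\<bar>\<eta> (s0 - t0)\<bar> + 1) = \<epsilon> / 4" by (simp add: P2_def)
      then have "\<bar>\<eta> (s0 - t0)\<bar> * e2 + e2 = \<epsilon> / 4" by (simp add: algebra_simps)
      moreover have "\<eta> (s0 - t0) * e2 \<le> \<bar>\<eta> (s0 - t0)\<bar> * e2" using e2 by (simp add: mult_right_mono)
      ultimately show ?thesis using e2 by linarith
    qed
    have "uniformly_continuous_on {t0-1..\<tau>} f0"
      by (rule compact_uniformly_continuous[OF continuous_on_subset[OF f0c]]) auto
    then obtain d3 where d3: "d3 > 0" "\<forall>p\<in>{t0-1..\<tau>}. \<forall>p'\<in>{t0-1..\<tau>}. dist p' p < d3 \<longrightarrow> dist (f0 p') (f0 p) < e2"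
      using e2 unfolding uniformly_continuous_on_def by blast
    define \<delta> where "\<delta> = min (min d1 d2) (min d3 1)"
    have \<delta>: "\<delta> > 0" using d1 d2 d3 by (simp add: \<delta>_def)
    show "\<exists>d>0. \<forall>s'\<in>{t0..\<tau>}. dist s' s0 < d \<longrightarrow>
        dist (inv \<iota> (integral {t0..s'} (\<lambda>\<sigma>. S (s' - \<sigma>) (fe \<sigma>)))) (inv \<iota> (integral {t0..s0} (\<lambda>\<sigma>. S (s0 - \<sigma>) (fe \<sigma>)))) < \<epsilon>"
    proof (intro exI[of _ \<delta>] conjI ballI impI \<delta>)
      fix s' assume s': "s' \<in> {t0..\<tau>}" and ds: "dist s' s0 < \<delta>"
      have goal: "norm (?vh s' - ?vh s0) < \<epsilon>"
      proof (cases "s0 < s'")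
        case True
        define h where "h = s' - s0"
        have h: "0 < h" "h < d1" "h < d2" "s' = s0 + h" using True ds by (auto simp: h_def \<delta>_def dist_real_def)
        define J where "J = integral {s0..s0+h} (\<lambda>\<sigma>. S (s0 + h - \<sigma>) (fe \<sigma>))"
        have vs': "v s' = S h (v s0) + J"
          unfolding h(4) J_def v_def conv_def by (rule conv_step[OF S fe]) (use s0 h in auto)
        have J: "J \<in> range \<iota> \<and> norm (inv \<iota> J) \<le> \<eta> h * Bf"
          unfolding J_def using sm[of s0 "s0 + h" fe Bf] s0 h t0 Bf continuous_on_subset[OF fe] s' by auto
        have Shv: "S h (v s0) = \<iota> (Sh h (?vh s0))" using Sh_i h ri vr' s0 by simp
        have "?vh s' = Sh h (?vh s0) + inv \<iota> J"
          unfolding vs' Shv using radd[of "\<iota> (Sh h (?vh s0))" J] J ii by auto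
        then have "?vh s' - ?vh s0 = (Sh h (?vh s0) - ?vh s0) + inv \<iota> J" by simp
        then have "norm (?vh s' - ?vh s0) \<le> norm (Sh h (?vh s0) - ?vh s0) + norm (inv \<iota> J)"
          by (metis norm_triangle_ineq)
        moreover have "norm (Sh h (?vh s0) - ?vh s0) < \<epsilon> / 4" using d2(2)[of h] h by simp
        moreover have "norm (inv \<iota> J) \<le> e1 * Bf"
          using J d1(2)[of h] h Bf by (meson mult_right_mono order_trans less_imp_le)
        ultimately show ?thesis using e1 \<epsilon> by linarith
      next
        case False
        show ?thesis
        proof (cases "s' = s0")
          case True then show ?thesis using \<epsilon> by simp
        next
          case False
          with \<open>\<not> s0 < s'\<close> have lt: "s' < s0" by simp
          define h where "h = s0 - s'"
          have h: "0 < h" "h < d1" "h < d3" "h < 1" "s0 = s' + h" using lt ds by (auto simp: h_def \<delta>_def dist_real_def)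
          have s0t: "t0 < s0" using lt s' by simp
          define Q where "Q = integral {t0..t0+h} (\<lambda>\<sigma>. S (t0 + h - \<sigma>) x0)"
          have Q: "Q \<in> range \<iota> \<and> norm (inv \<iota> Q) \<le> \<eta> h * norm x0"
            unfolding Q_def using sm[of t0 "t0 + h" "\<lambda>_. x0" "norm x0"] t0 h by auto
          have C1: "conv (\<lambda>_. x0) s0 = integral {t0..t0+h} (\<lambda>\<sigma>. S (s0 - \<sigma>) x0) + conv (\<lambda>_. x0) s'"
            unfolding conv_def h(5) using conv_shift[OF S x0c, of t0 s' h] s' h by simp
          have C2: "integral {t0..t0+h} (\<lambda>\<sigma>. S (s0 - \<sigma>) x0) = S (s' - t0) Q"
          proof -
            have "S (s' - t0) Q = integral {t0..t0+h} (\<lambda>\<sigma>. S (s' - t0) (S (t0 + h - \<sigma>) x0))"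
              unfolding Q_def using integral_linear[OF ci[where p=t0 and q="t0+h" and s="t0+h" and \<phi>="\<lambda>_. x0", OF order_refl x0c] c0_bl[OF S, of "s' - t0"]] s'
              by (simp add: o_def)
            also have "\<dots> = integral {t0..t0+h} (\<lambda>\<sigma>. S (s0 - \<sigma>) x0)"
            proof (rule integral_cong)
              fix \<sigma> assume "\<sigma> \<in> {t0..t0+h}"
              then show "S (s' - t0) (S (t0 + h - \<sigma>) x0) = S (s0 - \<sigma>) x0"
                using c0_add[OF S, of "s' - t0" "t0 + h - \<sigma>" x0] s' h by (simp add: algebra_simps)
            qed
            finally show ?thesis by simp
          qed
          define f0h where "f0h \<sigma> = f0 (\<sigma> - h)" for \<sigma>
          have f0hc: "continuous_on UNIV f0h" unfolding f0h_def
            by (rule continuous_on_compose2[OF f0c]) (auto intro!: continuous_intros)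
          have V1: "conv f0h s0 = conv f0 s'"
          proof -
            have "conv f0h s0 = integral {t0..t0+h} (\<lambda>\<sigma>. S (s0 - \<sigma>) (f0h \<sigma>)) + integral {t0..s'} (\<lambda>\<sigma>. S (s' - \<sigma>) (f0h (\<sigma> + h)))"
              unfolding conv_def h(5) using conv_shift[OF S f0hc, of t0 s' h] s' h by simp
            also have "integral {t0..t0+h} (\<lambda>\<sigma>. S (s0 - \<sigma>) (f0h \<sigma>)) = 0"
            proof -
              have "integral {t0..t0+h} (\<lambda>\<sigma>. S (s0 - \<sigma>) (f0h \<sigma>)) = integral {t0..t0+h} (\<lambda>\<sigma>. 0)"
              proof (rule integral_cong)
                fix \<sigma> assume "\<sigma> \<in> {t0..t0+h}"
                then show "S (s0 - \<sigma>) (f0h \<sigma>) = 0"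
                  using f0_left[of "\<sigma> - h"] c0_zero[OF S, of "s0 - \<sigma>"] h s' by (auto simp: f0h_def)
              qed
              then show ?thesis by simp
            qed
            finally show ?thesis by (simp add: conv_def f0h_def)
          qed
          define W where "W = integral {t0..s0} (\<lambda>\<sigma>. S (s0 - \<sigma>) (f0 \<sigma> - f0h \<sigma>))"
          have W: "W \<in> range \<iota> \<and> norm (inv \<iota> W) \<le> \<eta> (s0 - t0) * e2"
            unfolding W_def
          proof (rule sm)
            show "continuous_on {t0..s0} (\<lambda>\<sigma>. f0 \<sigma> - f0h \<sigma>)"
              by (intro continuous_intros continuous_on_subset[OF f0c] continuous_on_subset[OF f0hc]) auto
            fix \<sigma> assume \<sigma>: "\<sigma> \<in> {t0..s0}"
            have "dist (\<sigma> - h) \<sigma> < d3" using h by (simp add: dist_real_def)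
            moreover have "\<sigma> \<in> {t0-1..\<tau>}" "\<sigma> - h \<in> {t0-1..\<tau>}" using \<sigma> s0 h by auto
            ultimately have "dist (f0 (\<sigma> - h)) (f0 \<sigma>) < e2" using d3(2) by blast
            then show "norm (f0 \<sigma> - f0h \<sigma>) \<le> e2" by (simp add: f0h_def dist_norm norm_minus_commute)
          qed (use t0 s0t in auto)
          have W2: "W = conv f0 s0 - conv f0 s'"
          proof -
            have "W = conv f0 s0 - conv f0h s0"
              unfolding W_def conv_def
              by (subst integral_cong[where g="\<lambda>\<sigma>. S (s0 - \<sigma>) (f0 \<sigma>) - S (s0 - \<sigma>) (f0h \<sigma>)"])
                 (auto simp: c0_diff[OF S] intro!: integral_diff ci f0c f0hc)
            then show ?thesis using V1 by simp
          qed
          have "v s0 - v s' = S (s' - t0) Q + W"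
            using vsplit[of s0] vsplit[of s'] s0 s' C1 C2 W2 by (simp add: algebra_simps)
          also have "\<dots> = \<iota> (Sh (s' - t0) (inv \<iota> Q) + inv \<iota> W)"
            using Sh_i[of "s' - t0" "inv \<iota> Q"] ri Q W s' linear_simps(1)[OF bl] by simp
          finally have vd: "v s0 - v s' = \<iota> (Sh (s' - t0) (inv \<iota> Q) + inv \<iota> W)" .
          have "?vh s0 - ?vh s' = inv \<iota> (v s0 - v s')" using rdiff vr' s0 s' by auto
          also have "\<dots> = Sh (s' - t0) (inv \<iota> Q) + inv \<iota> W" unfolding vd ii ..
          finally have eq: "?vh s0 - ?vh s' = Sh (s' - t0) (inv \<iota> Q) + inv \<iota> W" .
          have n1: "norm (Sh (s' - t0) (inv \<iota> Q)) \<le> MY * (e1 * norm x0)"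
          proof -
            have "norm (Sh (s' - t0) (inv \<iota> Q)) \<le> MY * norm (inv \<iota> Q)" using MY s' by auto
            also have "norm (inv \<iota> Q) \<le> e1 * norm x0"
              using Q d1(2)[of h] h by (meson mult_right_mono norm_ge_zero order_trans less_imp_le)
            then have "MY * norm (inv \<iota> Q) \<le> MY * (e1 * norm x0)" using MY by (simp add: mult_left_mono)
            finally show ?thesis .
          qed
          have "norm (?vh s' - ?vh s0) = norm (Sh (s' - t0) (inv \<iota> Q) + inv \<iota> W)"
            using eq by (metis norm_minus_commute)
          also have "\<dots> \<le> norm (Sh (s' - t0) (inv \<iota> Q)) + norm (inv \<iota> W)" by (rule norm_triangle_ineq)
          finally show ?thesis using n1 W[THEN conjunct2] e1 e2b \<epsilon> by linarith
        qed
      qed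
      then show "dist (inv \<iota> (integral {t0..s'} (\<lambda>\<sigma>. S (s' - \<sigma>) (fe \<sigma>)))) (inv \<iota> (integral {t0..s0} (\<lambda>\<sigma>. S (s0 - \<sigma>) (fe \<sigma>)))) < \<epsilon>"
        by (simp add: dist_norm v_def conv_def)
    qed
  qed
qed

theorem lemma3p9:
  fixes \<iota> :: "'y::banach \<Rightarrow> 'x::banach"
    and T :: ereal
    and D :: "'x set" and G :: "'x \<Rightarrow> 'x"
    and S S\<^sub>\<gamma> :: "real \<Rightarrow> 'x \<Rightarrow> 'x"
    and \<eta> :: "real \<Rightarrow> real"
    and \<gamma> :: real and H :: "'y \<Rightarrow> 'x"
    and t\<^sub>0 \<tau> :: real and f :: "real \<Rightarrow> 'x" and u\<^sub>0 :: 'y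
    and u :: "real \<Rightarrow> 'x"
  assumes emb: "bounded_linear \<iota>" "inj \<iota>"
    and T_pos: "T > 0"
    and gen: "generates D G S"
    and S_Y: "\<forall>t\<ge>0. \<forall>y. S t (\<iota> y) \<in> range \<iota>"
    and S_Y_cont: "\<forall>y. continuous_on {0..} (\<lambda>t. inv \<iota> (S t (\<iota> y)))"
    and eta_pos: "\<forall>\<delta>>0. \<eta> \<delta> > 0"
    and eta_lim: "(\<eta> \<longlongrightarrow> 0) (at_right 0)"
    and smoothing: "\<forall>s\<^sub>0 s\<^sub>1 (\<phi>::real \<Rightarrow> 'x). 0 \<le> s\<^sub>0 \<longrightarrow> s\<^sub>0 < s\<^sub>1 \<longrightarrow> continuous_on {s\<^sub>0..s\<^sub>1} \<phi> \<longrightarrow>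
          integral {s\<^sub>0..s\<^sub>1} (\<lambda>s. S (s\<^sub>1 - s) (\<phi> s)) \<in> range \<iota> \<and>
          norm (inv \<iota> (integral {s\<^sub>0..s\<^sub>1} (\<lambda>s. S (s\<^sub>1 - s) (\<phi> s))))
            \<le> \<eta> (s\<^sub>1 - s\<^sub>0) * (SUP s\<in>{s\<^sub>0..s\<^sub>1}. norm (\<phi> s))"
    and D_sub: "D \<subseteq> range \<iota>"
    and D_dense: "closure (\<iota> -` D) = UNIV"
    and H: "bounded_linear H"
    and gen_pert: "generates D (\<lambda>x. G x - \<gamma> *\<^sub>R H (inv \<iota> x)) S\<^sub>\<gamma>"
    and times: "0 \<le> t\<^sub>0" "t\<^sub>0 < \<tau>" "ereal \<tau> < T"
    and f: "continuous_on {t\<^sub>0..\<tau>} f"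
    and u_def: "\<forall>t\<in>{t\<^sub>0..\<tau>}. u t = S (t - t\<^sub>0) (\<iota> u\<^sub>0) + integral {t\<^sub>0..t} (\<lambda>s. S (t - s) (f s))"
  shows "\<forall>t\<in>{t\<^sub>0..\<tau>}.
           (\<lambda>s. S\<^sub>\<gamma> (t - s) (f s + \<gamma> *\<^sub>R H (inv \<iota> (u s)))) integrable_on {t\<^sub>0..t} \<and>
           u t = S\<^sub>\<gamma> (t - t\<^sub>0) (\<iota> u\<^sub>0)
                 + integral {t\<^sub>0..t} (\<lambda>s. S\<^sub>\<gamma> (t - s) (f s + \<gamma> *\<^sub>R H (inv \<iota> (u s))))"
proof -
  have S: "c0_semigroup S" using gen_sg[OF gen] .
  have Sg: "c0_semigroup S\<^sub>\<gamma>" using gen_sg[OF gen_pert] .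
  note ii = rng_ii[OF emb] and ri = rng_ri[OF emb] and radd = rng_add[OF emb]
  define cl where "cl \<sigma> = max t\<^sub>0 (min \<tau> \<sigma>)" for \<sigma>
  have cl_in: "cl \<sigma> \<in> {t\<^sub>0..\<tau>}" for \<sigma> using times by (auto simp: cl_def)
  have cl_id: "cl \<sigma> = \<sigma>" if "\<sigma> \<in> {t\<^sub>0..\<tau>}" for \<sigma> using that by (auto simp: cl_def)
  have clc: "continuous_on UNIV cl" unfolding cl_def by (intro continuous_intros)
  define fe where "fe \<sigma> = f (cl \<sigma>)" for \<sigma>
  have fec: "continuous_on UNIV fe" unfolding fe_def
    by (rule continuous_on_compose2[OF f clc]) (use cl_in in auto)
  have fe_left: "fe \<sigma> = fe t\<^sub>0" if "\<sigma> \<le> t\<^sub>0" for \<sigma> using times that by (simp add: fe_def cl_def)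
  have fe_eq: "fe \<sigma> = f \<sigma>" if "\<sigma> \<in> {t\<^sub>0..\<tau>}" for \<sigma> using that by (simp add: fe_def cl_id)
  define v where "v s = integral {t\<^sub>0..s} (\<lambda>\<sigma>. S (s - \<sigma>) (fe \<sigma>))" for s
  have u_eq: "u t = S (t - t\<^sub>0) (\<iota> u\<^sub>0) + v t" if t: "t \<in> {t\<^sub>0..\<tau>}" for t
  proof -
    have "integral {t\<^sub>0..t} (\<lambda>s. S (t - s) (f s)) = v t"
      unfolding v_def by (rule integral_cong) (use t fe_eq in auto)
    then show ?thesis using u_def t by auto
  qed
  note yc = ycont[OF emb S S_Y S_Y_cont eta_pos eta_lim smoothing times(1,2) fec fe_left]
  have vr: "v s \<in> range \<iota>" if "s \<in> {t\<^sub>0..\<tau>}" for s using yc(1) that by (simp add: v_def)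
  have vc: "continuous_on {t\<^sub>0..\<tau>} (\<lambda>s. inv \<iota> (v s))" using yc(2) by (simp add: v_def)
  define uh where "uh s = inv \<iota> (u s)" for s
  have ur: "u s \<in> range \<iota>" if s: "s \<in> {t\<^sub>0..\<tau>}" for s
    using u_eq[OF s] radd[OF _ vr[OF s], of "S (s - t\<^sub>0) (\<iota> u\<^sub>0)"] S_Y s by auto
  have uh_eq: "uh s = inv \<iota> (S (s - t\<^sub>0) (\<iota> u\<^sub>0)) + inv \<iota> (v s)" if s: "s \<in> {t\<^sub>0..\<tau>}" for s
    using u_eq[OF s] radd[OF _ vr[OF s], of "S (s - t\<^sub>0) (\<iota> u\<^sub>0)"] S_Y s by (auto simp: uh_def)
  have uhc: "continuous_on {t\<^sub>0..\<tau>} uh"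
  proof (rule continuous_on_eq[OF _ uh_eq[symmetric]])
    have "continuous_on {t\<^sub>0..\<tau>} (\<lambda>s. inv \<iota> (S (s - t\<^sub>0) (\<iota> u\<^sub>0)))"
      by (rule continuous_on_compose2[OF S_Y_cont[rule_format, of u\<^sub>0]]) (auto intro!: continuous_intros)
    then show "continuous_on {t\<^sub>0..\<tau>} (\<lambda>s. inv \<iota> (S (s - t\<^sub>0) (\<iota> u\<^sub>0)) + inv \<iota> (v s))"
      using vc by (intro continuous_on_add)
  qed
  define g where "g \<sigma> = fe \<sigma> + \<gamma> *\<^sub>R H (uh (cl \<sigma>))" for \<sigma>
  have Huhc: "continuous_on UNIV (\<lambda>\<sigma>. H (uh (cl \<sigma>)))"
    by (rule continuous_on_compose2[OF linear_continuous_on[OF H] continuous_on_compose2[OF uhc clc]])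
      (use cl_in in auto)
  have gc: "continuous_on UNIV g" unfolding g_def by (intro continuous_intros fec Huhc)
  have g_eq: "g \<sigma> = f \<sigma> + \<gamma> *\<^sub>R H (inv \<iota> (u \<sigma>))" if "\<sigma> \<in> {t\<^sub>0..\<tau>}" for \<sigma>
    using that by (simp add: g_def fe_eq cl_id uh_def)
  define ut where "ut t = S\<^sub>\<gamma> (t - t\<^sub>0) (\<iota> u\<^sub>0) + integral {t\<^sub>0..t} (\<lambda>\<sigma>. S\<^sub>\<gamma> (t - \<sigma>) (g \<sigma>))" for t
  define e where "e t = u t - ut t" for t
  have uc: "continuous_on {t\<^sub>0..\<tau>} u"
    by (rule continuous_on_eq[OF mild_cont[OF S fec, of t\<^sub>0 \<tau> "\<iota> u\<^sub>0"]]) (use u_eq in \<open>auto simp: v_def\<close>)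
  have utc: "continuous_on {t\<^sub>0..\<tau>} ut" unfolding ut_def by (rule mild_cont[OF Sg gc])
  have ec: "continuous_on {t\<^sub>0..\<tau>} e" unfolding e_def using uc utc by (intro continuous_on_diff)
  have EA: "integral {t\<^sub>0..t} e \<in> D \<and> G (integral {t\<^sub>0..t} e) - \<gamma> *\<^sub>R H (inv \<iota> (integral {t\<^sub>0..t} e)) = e t"
    if t: "t \<in> {t\<^sub>0..\<tau>}" for t
  proof -
    have sub: "{t\<^sub>0..t} \<subseteq> {t\<^sub>0..\<tau>}" using t by auto
    define U where "U = integral {t\<^sub>0..t} u"
    define Ut where "Ut = integral {t\<^sub>0..t} ut"
    have U_eq: "U = integral {t\<^sub>0..t} (\<lambda>s. S (s - t\<^sub>0) (\<iota> u\<^sub>0) + integral {t\<^sub>0..s} (\<lambda>\<sigma>. S (s - \<sigma>) (fe \<sigma>)))"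
      unfolding U_def by (rule integral_cong) (use u_eq sub in \<open>auto simp: v_def\<close>)
    have mU: "U \<in> D \<and> G U = u t - \<iota> u\<^sub>0 - integral {t\<^sub>0..t} fe"
      using mild_integrated[OF gen fec, of t\<^sub>0 t "\<iota> u\<^sub>0"] U_eq u_eq[OF t] t by (simp add: v_def)
    have mUt: "Ut \<in> D \<and> G Ut - \<gamma> *\<^sub>R H (inv \<iota> Ut) = ut t - \<iota> u\<^sub>0 - integral {t\<^sub>0..t} g"
    proof -
      have utf: "ut = (\<lambda>s. S\<^sub>\<gamma> (s - t\<^sub>0) (\<iota> u\<^sub>0) + integral {t\<^sub>0..s} (\<lambda>\<sigma>. S\<^sub>\<gamma> (s - \<sigma>) (g \<sigma>)))"
        by (simp add: fun_eq_iff ut_def)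
      show ?thesis using mild_integrated[OF gen_pert gc, of t\<^sub>0 t "\<iota> u\<^sub>0"] t unfolding Ut_def utf by simp
    qed
    have ui: "u integrable_on {t\<^sub>0..t}" using integrable_continuous_real continuous_on_subset[OF uc sub] by blast
    have uti: "ut integrable_on {t\<^sub>0..t}" using integrable_continuous_real continuous_on_subset[OF utc sub] by blast
    have uhi: "uh integrable_on {t\<^sub>0..t}" using integrable_continuous_real continuous_on_subset[OF uhc sub] by blast
    have int_e: "integral {t\<^sub>0..t} e = U - Ut"
      unfolding e_def U_def Ut_def by (rule integral_diff[OF ui uti])
    have eD: "U - Ut \<in> D \<and> (G (U - Ut) - \<gamma> *\<^sub>R H (inv \<iota> (U - Ut))) =
        (G U - \<gamma> *\<^sub>R H (inv \<iota> U)) - (G Ut - \<gamma> *\<^sub>R H (inv \<iota> Ut))"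
      using gen_diff[OF gen_pert mU[THEN conjunct1] mUt[THEN conjunct1]] by simp
    have iU: "inv \<iota> U = integral {t\<^sub>0..t} uh"
    proof -
      have "\<iota> (integral {t\<^sub>0..t} uh) = integral {t\<^sub>0..t} (\<iota> \<circ> uh)"
        by (rule integral_linear[OF uhi emb(1), symmetric])
      also have "\<dots> = U" unfolding U_def
        by (rule integral_cong) (use ri ur sub in \<open>auto simp: uh_def\<close>)
      finally show ?thesis using ii by metis
    qed
    have HU: "H (inv \<iota> U) = integral {t\<^sub>0..t} (\<lambda>s. H (uh s))"
      unfolding iU using integral_linear[OF uhi H] by (simp add: o_def)
    have Huhi: "(\<lambda>s. H (uh s)) integrable_on {t\<^sub>0..t}"
      using integrable_continuous_real continuous_on_compose2[OF linear_continuous_on[OF H] continuous_on_subset[OF uhc sub]]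
      by blast
    have fei: "fe integrable_on {t\<^sub>0..t}" using integrable_continuous_real continuous_on_subset[OF fec] by blast
    have intg: "integral {t\<^sub>0..t} g = integral {t\<^sub>0..t} fe + \<gamma> *\<^sub>R integral {t\<^sub>0..t} (\<lambda>s. H (uh s))"
    proof -
      have "integral {t\<^sub>0..t} g = integral {t\<^sub>0..t} (\<lambda>s. fe s + \<gamma> *\<^sub>R H (uh s))"
        by (rule integral_cong) (use sub cl_id in \<open>auto simp: g_def\<close>)
      also have "\<dots> = integral {t\<^sub>0..t} fe + integral {t\<^sub>0..t} (\<lambda>s. \<gamma> *\<^sub>R H (uh s))"
        by (rule Henstock_Kurzweil_Integration.integral_add[OF fei integrable_cmul[OF Huhi]])
      finally show ?thesis by (simp add: integral_cmul)
    qed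
    have "G U - \<gamma> *\<^sub>R H (inv \<iota> U) = u t - \<iota> u\<^sub>0 - integral {t\<^sub>0..t} g"
      using mU unfolding HU intg by (simp add: algebra_simps)
    then have "G (U - Ut) - \<gamma> *\<^sub>R H (inv \<iota> (U - Ut)) = e t"
      using eD mUt by (simp add: e_def)
    then show ?thesis using eD int_e by simp
  qed
  have e0: "e t = 0" if "t \<in> {t\<^sub>0..\<tau>}" for t
    by (rule gen_unique[OF gen_pert ec _ that]) (use EA in simp)
  show ?thesis
  proof (intro ballI conjI)
    fix t assume t: "t \<in> {t\<^sub>0..\<tau>}"
    have eqi: "S\<^sub>\<gamma> (t - s) (g s) = S\<^sub>\<gamma> (t - s) (f s + \<gamma> *\<^sub>R H (inv \<iota> (u s)))" if "s \<in> {t\<^sub>0..t}" for s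
      using g_eq[of s] that t by auto
    have gi: "(\<lambda>s. S\<^sub>\<gamma> (t - s) (g s)) integrable_on {t\<^sub>0..t}"
    proof -
      have "continuous_on {t\<^sub>0..t} (\<lambda>s. S\<^sub>\<gamma> (t - s) (g s))"
        by (rule sg_cont_on[OF Sg]) (auto intro!: continuous_intros continuous_on_subset[OF gc])
      then show ?thesis using integrable_continuous_real by blast
    qed
    show "(\<lambda>s. S\<^sub>\<gamma> (t - s) (f s + \<gamma> *\<^sub>R H (inv \<iota> (u s)))) integrable_on {t\<^sub>0..t}"
      by (rule integrable_eq[OF gi eqi])
    have "u t = ut t" using e0[OF t] by (simp add: e_def)
    also have "\<dots> = S\<^sub>\<gamma> (t - t\<^sub>0) (\<iota> u\<^sub>0) + integral {t\<^sub>0..t} (\<lambda>s. S\<^sub>\<gamma> (t - s) (f s + \<gamma> *\<^sub>R H (inv \<iota> (u s))))"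
    proof -
      have "integral {t\<^sub>0..t} (\<lambda>\<sigma>. S\<^sub>\<gamma> (t - \<sigma>) (g \<sigma>)) =
          integral {t\<^sub>0..t} (\<lambda>s. S\<^sub>\<gamma> (t - s) (f s + \<gamma> *\<^sub>R H (inv \<iota> (u s))))"
        by (rule integral_cong) (rule eqi)
      then show ?thesis unfolding ut_def by simp
    qed
    finally show "u t = S\<^sub>\<gamma> (t - t\<^sub>0) (\<iota> u\<^sub>0) + integral {t\<^sub>0..t} (\<lambda>s. S\<^sub>\<gamma> (t - s) (f s + \<gamma> *\<^sub>R H (inv \<iota> (u s))))" .
  qed
qed

end
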